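(* For every $t\in\mathtt T_J$: $t$ is strongly normalizing for $\to_{d\beta}$ if and only if $t$ is strongly normalizing for $\to_\beta\cup\to_\pi$.
   Context: Terms $\mathtt T_J$: $t,u,r ::= x \mid \lambda x.t \mid t(u,y.r)$ ($y$ bound in $r$), up to $\alpha$-equivalence; $\{u/x\}t$ capture-avoiding substitution. List contexts $\mathtt D ::= \Diamond \mid t(u,y.\mathtt D)$. Distant beta: $\mathtt D\langle\lambda x.t\rangle(u,y.r) \mapsto_{d\beta} \{\{u/x\}\mathtt D\langle t\rangle/y\}r$ (variables bound by $\mathtt D$ not free in $u$, $x$ not in $\mathtt D$). Rules of $\Lambda J$: $\beta$: $(\lambda x.t)(u,y.r)\mapsto\{\{u/x\}t/y\}r$; $\pi$: $t(u,x.r)(u',y.r')\mapsto t(u,x.r(u',y.r'))$ (with $x\notin\mathrm{fv}(u')\cup\mathrm{fv}(r')$). Each of $\to_{d\beta},\to_\beta,\to_\pi$ is the closure of the corresponding rule under all term contexts. A term is strongly normalizing for a relation if it admits no infinite reduction sequence. *)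

theory Defs
  imports Main
begin

text \<open>Terms of Lambda-J in de Bruijn notation (so alpha-equivalence is syntactic
equality).  \<open>JApp t u r\<close> represents t(u, y.r): the variable y is bound in r
and is represented by index 0 in r.  \<open>JLam t\<close> represents \<lambda>x.t, x being index 0 in t.\<close>

datatype tm = JVar nat | JLam tm | JApp tm tm tm

fun lift :: "nat \<Rightarrow> tm \<Rightarrow> tm" where
  "lift k (JVar i) = (if i < k then JVar i else JVar (Suc i))"
| "lift k (JLam t) = JLam (lift (Suc k) t)"
| "lift k (JApp t u r) = JApp (lift k t) (lift k u) (lift (Suc k) r)"

fun subst :: "nat \<Rightarrow> tm \<Rightarrow> tm \<Rightarrow> tm" where
  "subst k s (JVar i) = (if i < k then JVar i else if i = k then s else JVar (i - 1))"
| "subst k s (JLam t) = JLam (subst (Suc k) (lift 0 s) t)"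
| "subst k s (JApp t u r) = JApp (subst k s t) (subst k s u) (subst (Suc k) (lift 0 s) r)"

text \<open>List contexts D ::= hole | t(u, y.D), represented as the list of pairs (t,u)
from the outside in.\<close>
type_synonym lctx = "(tm \<times> tm) list"

fun plug :: "lctx \<Rightarrow> tm \<Rightarrow> tm" where
  "plug [] s = s"
| "plug ((t, u) # D) s = JApp t u (plug D s)"

inductive dbeta_rule :: "tm \<Rightarrow> tm \<Rightarrow> bool" where
  "dbeta_rule (JApp (plug D (JLam t)) u r)
              (subst 0 (plug D (subst 0 ((lift 0 ^^ length D) u) t)) r)"

inductive beta_rule :: "tm \<Rightarrow> tm \<Rightarrow> bool" where
  "beta_rule (JApp (JLam t) u r) (subst 0 (subst 0 u t) r)"

inductive pi_rule :: "tm \<Rightarrow> tm \<Rightarrow> bool" where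
  "pi_rule (JApp (JApp t u r) u' r') (JApp t u (JApp r (lift 0 u') (lift 1 r')))"

inductive ctx_clos :: "(tm \<Rightarrow> tm \<Rightarrow> bool) \<Rightarrow> tm \<Rightarrow> tm \<Rightarrow> bool" for R where
  root: "R t s \<Longrightarrow> ctx_clos R t s"
| lam: "ctx_clos R t s \<Longrightarrow> ctx_clos R (JLam t) (JLam s)"
| app1: "ctx_clos R t s \<Longrightarrow> ctx_clos R (JApp t u r) (JApp s u r)"
| app2: "ctx_clos R u s \<Longrightarrow> ctx_clos R (JApp t u r) (JApp t s r)"
| app3: "ctx_clos R r s \<Longrightarrow> ctx_clos R (JApp t u r) (JApp t u s)"

definition step_dbeta :: "tm \<Rightarrow> tm \<Rightarrow> bool" where
  "step_dbeta = ctx_clos dbeta_rule"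
definition step_beta :: "tm \<Rightarrow> tm \<Rightarrow> bool" where
  "step_beta = ctx_clos beta_rule"
definition step_pi :: "tm \<Rightarrow> tm \<Rightarrow> bool" where
  "step_pi = ctx_clos pi_rule"

definition SN :: "(tm \<Rightarrow> tm \<Rightarrow> bool) \<Rightarrow> tm \<Rightarrow> bool" where
  "SN R t \<longleftrightarrow> \<not> (\<exists>f. f 0 = t \<and> (\<forall>i. R (f i) (f (Suc i))))"

end

theory Submission
  imports Defs "HOL-Library.Multiset"
begin


datatype ty = TB | Arr "ty multiset" ty

type_synonym ctx = "nat \<Rightarrow> ty multiset"

definition cadd :: "ctx \<Rightarrow> ctx \<Rightarrow> ctx" where "cadd G D = (\<lambda>i. G i + D i)"
definition cle :: "ctx \<Rightarrow> ctx \<Rightarrow> bool" where "cle G D = (\<forall>i. G i \<subseteq># D i)"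
definition ccons :: "ty multiset \<Rightarrow> ctx \<Rightarrow> ctx" where
  "ccons M G = (\<lambda>i. case i of 0 \<Rightarrow> M | Suc j \<Rightarrow> G j)"
definition cins :: "nat \<Rightarrow> ty multiset \<Rightarrow> ctx \<Rightarrow> ctx" where
  "cins k M G = (\<lambda>i. if i < k then G i else if i = k then M else G (i - 1))"
definition cdel :: "nat \<Rightarrow> ctx \<Rightarrow> ctx" where
  "cdel k G = (\<lambda>i. if i < k then G i else G (Suc i))"
definition cemp :: ctx where "cemp = (\<lambda>i. {#})"

definition arrs :: "(ty multiset \<times> ty) multiset \<Rightarrow> ty multiset" where
  "arrs P = image_mset (\<lambda>p. Arr (fst p) (snd p)) P"
definition doms :: "(ty multiset \<times> ty) multiset \<Rightarrow> ty multiset" where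
  "doms P = sum_mset (image_mset fst P)"
definition cods :: "(ty multiset \<times> ty) multiset \<Rightarrow> ty multiset" where
  "cods P = image_mset snd P"

lemma arrs_simps[simp]: "arrs {#} = {#}" "arrs (add_mset p P) = add_mset (Arr (fst p) (snd p)) (arrs P)"
  "arrs (P + Q) = arrs P + arrs Q" "arrs P = {#} \<longleftrightarrow> P = {#}"
  by (auto simp: arrs_def)
lemma doms_simps[simp]: "doms {#} = {#}" "doms (add_mset p P) = fst p + doms P"
  "doms (P + Q) = doms P + doms Q"
  by (auto simp: doms_def)
lemma cods_simps[simp]: "cods {#} = {#}" "cods (add_mset p P) = add_mset (snd p) (cods P)"
  "cods (P + Q) = cods P + cods Q" "cods P = {#} \<longleftrightarrow> P = {#}"
  by (auto simp: cods_def)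

inductive tj :: "ctx \<Rightarrow> tm \<Rightarrow> ty \<Rightarrow> nat \<Rightarrow> bool"
  and mtj :: "ctx \<Rightarrow> tm \<Rightarrow> ty multiset \<Rightarrow> nat \<Rightarrow> bool" where
  T_var: "\<sigma> \<in># G i \<Longrightarrow> tj G (JVar i) \<sigma> 1"
| T_lam: "tj (ccons M G) t \<sigma> n \<Longrightarrow> tj G (JLam t) (Arr M \<sigma>) (Suc n)"
| T_app: "mtj G1 t (arrs P + A0) n1 \<Longrightarrow> arrs P + A0 \<noteq> {#} \<Longrightarrow> mtj G2 u B n2 \<Longrightarrow> B \<noteq> {#} \<Longrightarrow>
    doms P \<subseteq># B \<Longrightarrow> tj (ccons N G3) r \<sigma> n3 \<Longrightarrow> N \<subseteq># cods P \<Longrightarrow>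
    cle (cadd (cadd G1 G2) G3) G \<Longrightarrow> tj G (JApp t u r) \<sigma> (Suc (n1 + n2 + n3))"
| M_empty: "mtj G t {#} 0"
| M_add: "tj G1 t \<sigma> n1 \<Longrightarrow> mtj G2 t A n2 \<Longrightarrow> cle (cadd G1 G2) G \<Longrightarrow>
    mtj G t (add_mset \<sigma> A) (n1 + n2)"

inductive_cases tj_varE: "tj G (JVar i) \<sigma> n"
inductive_cases tj_lamE: "tj G (JLam t) \<sigma> n"
inductive_cases tj_appE0: "tj G (JApp t u r) \<sigma> n"

lemma tj_appE:
  assumes "tj G (JApp t u r) \<sigma> n"
  obtains G1 P A0 n1 G2 B n2 N G3 n3 where "mtj G1 t (arrs P + A0) n1" "arrs P + A0 \<noteq> {#}"
    "mtj G2 u B n2" "B \<noteq> {#}" "doms P \<subseteq># B"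
    "tj (ccons N G3) r \<sigma> n3" "N \<subseteq># cods P" "cle (cadd (cadd G1 G2) G3) G" "n = Suc (n1 + n2 + n3)"
proof -
  have "\<exists>G1 P A0 n1 G2 B n2 N G3 n3. mtj G1 t (arrs P + A0) n1 \<and> arrs P + A0 \<noteq> {#} \<and>
    mtj G2 u B n2 \<and> B \<noteq> {#} \<and> doms P \<subseteq># B \<and>
    tj (ccons N G3) r \<sigma> n3 \<and> N \<subseteq># cods P \<and> cle (cadd (cadd G1 G2) G3) G \<and> n = Suc (n1 + n2 + n3)"
    using assms by (elim tj_appE0) (rule exI conjI | assumption | simp)+
  then show thesis using that by blast
qed
inductive_cases mtj_emptyE: "mtj G t {#} n"

lemma cle_refl[simp]: "cle G G" by (simp add: cle_def)
lemma cle_trans[trans]: "cle G1 G2 \<Longrightarrow> cle G2 G3 \<Longrightarrow> cle G1 G3"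
  by (meson cle_def subset_mset.order_trans)
lemma cadd_comm: "cadd G D = cadd D G" by (auto simp: cadd_def add.commute)
lemma cadd_assoc: "cadd (cadd G D) E = cadd G (cadd D E)" by (auto simp: cadd_def add.assoc)
lemma cadd_emp[simp]: "cadd cemp G = G" "cadd G cemp = G" by (auto simp: cadd_def cemp_def)
lemma cle_emp[simp]: "cle cemp G" by (simp add: cle_def cemp_def)
lemma cle_add1: "cle G (cadd G D)" by (simp add: cle_def cadd_def)
lemma cle_add2: "cle D (cadd G D)" by (simp add: cle_def cadd_def)
lemma cle_mono: "cle G G' \<Longrightarrow> cle D D' \<Longrightarrow> cle (cadd G D) (cadd G' D')"
  by (auto simp: cle_def cadd_def intro: subset_mset.add_mono)
lemma ccons_cadd: "cadd (ccons M G) (ccons N D) = ccons (M + N) (cadd G D)"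
  by (auto simp: cadd_def ccons_def split: nat.splits)
lemma cle_ccons: "cle (ccons M G) (ccons N D) \<longleftrightarrow> M \<subseteq># N \<and> cle G D"
  by (auto simp: cle_def ccons_def split: nat.splits)
lemma ccons_eta: "ccons (G 0) (cdel 0 G) = G"
  by (auto simp: ccons_def cdel_def split: nat.splits)
lemma cins0: "cins 0 M G = ccons M G"
  by (auto simp: cins_def ccons_def split: nat.splits)
lemma cdel0_ccons[simp]: "cdel 0 (ccons M G) = G"
  by (auto simp: cdel_def ccons_def)
lemma ccons_0[simp]: "ccons M G 0 = M" by (simp add: ccons_def)
lemma ccons_Suc[simp]: "ccons M G (Suc i) = G i" by (simp add: ccons_def)
lemma cins_Suc: "cins (Suc k) M (ccons N G) = ccons N (cins k M G)"
  by (auto simp: cins_def ccons_def split: nat.splits)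
lemma cdel_Suc: "cdel (Suc k) (ccons N G) = ccons N (cdel k G)"
  by (auto simp: cdel_def ccons_def split: nat.splits)
lemma cins_eta: "cins k (G k) (cdel k G) = G"
  by (rule ext) (auto simp: cins_def cdel_def)
lemma cdel_cins[simp]: "cdel k (cins k M G) = G"
  by (auto simp: cins_def cdel_def)
lemma cins_at[simp]: "cins k M G k = M" by (simp add: cins_def)
lemma cadd_cins: "cadd (cins k M G) (cins k N D) = cins k (M + N) (cadd G D)"
  by (auto simp: cadd_def cins_def)
lemma cadd_cdel: "cadd (cdel k G) (cdel k D) = cdel k (cadd G D)"
  by (auto simp: cadd_def cdel_def)
lemma cle_cdel: "cle G D \<Longrightarrow> cle (cdel k G) (cdel k D)"
  by (auto simp: cle_def cdel_def)
lemma cle_cins: "cle (cins k M G) (cins k N D) \<longleftrightarrow> M \<subseteq># N \<and> cle G D"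
proof
  assume a: "cle (cins k M G) (cins k N D)"
  have "M \<subseteq># N" using a[unfolded cle_def, rule_format, of k] by simp
  moreover have "cle G D"
    unfolding cle_def
  proof
    fix i show "G i \<subseteq># D i"
    proof (cases "i < k")
      case True then show ?thesis using a[unfolded cle_def, rule_format, of i] by (simp add: cins_def)
    next
      case False then show ?thesis using a[unfolded cle_def, rule_format, of "Suc i"] by (simp add: cins_def)
    qed
  qed
  ultimately show "M \<subseteq># N \<and> cle G D" by simp
next
  assume "M \<subseteq># N \<and> cle G D" then show "cle (cins k M G) (cins k N D)"
    by (auto simp: cle_def cins_def)
qed
lemma cadd_apply: "cadd G D i = G i + D i" by (simp add: cadd_def)
lemma cemp_apply: "cemp i = {#}" by (simp add: cemp_def)
lemma ccons_emp: "ccons {#} cemp = cemp" by (auto simp: ccons_def cemp_def split: nat.splits)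


lemma tj_weaken:
  shows "tj G t \<sigma> n \<Longrightarrow> cle G G' \<Longrightarrow> tj G' t \<sigma> n"
    and "mtj G t A n \<Longrightarrow> cle G G' \<Longrightarrow> mtj G' t A n"
proof (induction arbitrary: G' and G' rule: tj_mtj.inducts)
  case (T_var \<sigma> G i) then show ?case by (metis cle_def mset_subset_eqD tj_mtj.T_var)
next
  case (T_lam M G t \<sigma> n) then show ?case by (auto simp: cle_ccons intro!: tj_mtj.intros)
next
  case (T_app G1 t P A0 n1 G2 u B n2 N G3 r \<sigma> n3 G)
  then show ?case by (meson cle_trans tj_mtj.T_app)
next
  case (M_empty G t) then show ?case by (simp add: tj_mtj.M_empty)
next
  case (M_add G1 t \<sigma> n1 G2 A n2 G) then show ?case by (meson cle_trans tj_mtj.M_add)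
qed

lemma tj_size: "tj G t \<sigma> n \<Longrightarrow> 1 \<le> n"
  by (induction rule: tj_mtj.inducts(1)[where ?P2.0="\<lambda>_ _ _ _. True"]) auto

lemma mtj_size: "mtj G t A n \<Longrightarrow> size A \<le> n"
  by (induction rule: tj_mtj.inducts(2)[where ?P1.0="\<lambda>_ _ _ _. True"]) (auto dest: tj_size)

lemma mtj_single: "tj G t \<sigma> n \<Longrightarrow> mtj G t {#\<sigma>#} n"
  using M_add[OF _ M_empty, of G t \<sigma> n cemp G] by simp

lemma mtj_extract: "mtj G t A n \<Longrightarrow> \<sigma> \<in># A \<Longrightarrow>
  \<exists>G1 G2 n1 n2. tj G1 t \<sigma> n1 \<and> mtj G2 t (A - {#\<sigma>#}) n2 \<and> cle (cadd G1 G2) G \<and> n = n1 + n2"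
proof (induction rule: tj_mtj.inducts(2)[where ?P1.0="\<lambda>_ _ _ _. True"])
  case (M_add G1 t \<sigma>' n1 G2 A n2 G)
  show ?case
  proof (cases "\<sigma> = \<sigma>'")
    case True
    have "tj G1 t \<sigma> n1" "mtj G2 t (add_mset \<sigma>' A - {#\<sigma>#}) n2" using M_add True by auto
    then show ?thesis using \<open>cle (cadd G1 G2) G\<close> by blast
  next
    case False
    then have "\<sigma> \<in># A" using M_add by auto
    then obtain H1 H2 m1 m2 where h: "tj H1 t \<sigma> m1" "mtj H2 t (A - {#\<sigma>#}) m2"
      "cle (cadd H1 H2) G2" "n2 = m1 + m2" using M_add by blast
    have "mtj (cadd G1 H2) t (add_mset \<sigma>' (A - {#\<sigma>#})) (n1 + m2)"
      by (rule tj_mtj.M_add[OF M_add(1) h(2)]) simp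
    moreover have "add_mset \<sigma>' (A - {#\<sigma>#}) = add_mset \<sigma>' A - {#\<sigma>#}" using False by simp
    moreover have "cle (cadd H1 (cadd G1 H2)) G"
    proof -
      have "cle (cadd H1 (cadd G1 H2)) (cadd G1 (cadd H1 H2))"
        by (simp add: cle_def cadd_apply add_ac)
      also have "cle \<dots> (cadd G1 G2)" using h(3) by (simp add: cle_mono)
      finally show ?thesis using \<open>cle (cadd G1 G2) G\<close> by (rule cle_trans)
    qed
    ultimately have "tj H1 t \<sigma> m1 \<and> mtj (cadd G1 H2) t (add_mset \<sigma>' A - {#\<sigma>#}) (n1 + m2) \<and>
      cle (cadd H1 (cadd G1 H2)) G \<and> n1 + n2 = m1 + (n1 + m2)" using h by simp
    then show ?thesis by blast
  qed
qed auto


lemma mtj_union: "mtj G1 t A n1 \<Longrightarrow> mtj G2 t B n2 \<Longrightarrow> mtj (cadd G1 G2) t (A + B) (n1 + n2)"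
proof (induction rule: tj_mtj.inducts(2)[where ?P1.0="\<lambda>_ _ _ _. True"])
  case (M_empty G t)
  have "mtj (cadd G G2) t B n2" by (rule tj_weaken(2)[OF M_empty cle_add2])
  then show ?case by simp
next
  case (M_add H1 t \<sigma> m1 H2 A m2 G)
  have "mtj (cadd H2 G2) t (A + B) (m2 + n2)" using M_add.IH M_add.prems by simp
  moreover have "cle (cadd H1 (cadd H2 G2)) (cadd G G2)"
    using cle_mono[OF \<open>cle (cadd H1 H2) G\<close> cle_refl[of G2]] by (simp add: cadd_assoc)
  ultimately show ?case using tj_mtj.M_add[OF \<open>tj H1 t \<sigma> m1\<close>] by (simp add: add.assoc)
qed auto

lemma mtj_split: "mtj G t (A + B) n \<Longrightarrow>
  \<exists>G1 G2 n1 n2. mtj G1 t A n1 \<and> mtj G2 t B n2 \<and> cle (cadd G1 G2) G \<and> n = n1 + n2"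
proof (induction A arbitrary: G n)
  case empty
  then show ?case by (intro exI[of _ cemp] exI[of _ G] exI[of _ 0] exI[of _ n]) (auto intro: M_empty)
next
  case (add x A)
  then obtain H1 H2 m1 m2 where h: "tj H1 t x m1" "mtj H2 t (A + B) m2" "cle (cadd H1 H2) G" "n = m1 + m2"
    using mtj_extract[OF add(2), of x] by auto
  obtain K1 K2 k1 k2 where k: "mtj K1 t A k1" "mtj K2 t B k2" "cle (cadd K1 K2) H2" "m2 = k1 + k2"
    using add(1)[OF h(2)] by blast
  have "mtj (cadd H1 K1) t (add_mset x A) (m1 + k1)" by (rule M_add[OF h(1) k(1)]) simp
  moreover have "cle (cadd (cadd H1 K1) K2) G"
  proof -
    have "cle (cadd (cadd H1 K1) K2) (cadd H1 H2)" using cle_mono[OF cle_refl[of H1] k(3)]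
      by (simp add: cadd_assoc)
    then show ?thesis using h(3) by (rule cle_trans)
  qed
  ultimately have "mtj (cadd H1 K1) t (add_mset x A) (m1 + k1) \<and> mtj K2 t B k2 \<and>
    cle (cadd (cadd H1 K1) K2) G \<and> n = (m1 + k1) + k2" using k h by simp
  then show ?case by blast
qed

lemma mtj_sub: "A' \<subseteq># A \<Longrightarrow> mtj G t A n \<Longrightarrow> \<exists>n'. n' \<le> n \<and> mtj G t A' n'"
proof -
  assume a: "A' \<subseteq># A" "mtj G t A n"
  then have "mtj G t (A' + (A - A')) n" by (simp add: subset_mset.add_diff_inverse)
  then obtain G1 G2 n1 n2 where "mtj G1 t A' n1" "cle (cadd G1 G2) G" "n = n1 + n2"
    using mtj_split by blast
  moreover have "cle G1 G" using \<open>cle (cadd G1 G2) G\<close> cle_add1 cle_trans by blast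
  ultimately show ?thesis using tj_weaken(2)[OF \<open>mtj G1 t A' n1\<close> \<open>cle G1 G\<close>] by (intro exI[of _ n1]) auto
qed

lemma mtj_replicate: "tj G t \<sigma> n \<Longrightarrow> \<exists>G' m. mtj G' t (replicate_mset k \<sigma>) m"
proof (induction k)
  case 0 then show ?case using M_empty by auto
next
  case (Suc k)
  then obtain G' m where "mtj G' t (replicate_mset k \<sigma>) m" by auto
  then show ?case using M_add[OF Suc(2), of G' _ _ "cadd G G'"] by auto
qed

lemma lift_tj:
  shows "tj G t \<sigma> n \<Longrightarrow> tj (cins k M G) (lift k t) \<sigma> n"
    and "mtj G t A n \<Longrightarrow> mtj (cins k M G) (lift k t) A n"
proof (induction arbitrary: k M and k M rule: tj_mtj.inducts)
  case (T_var \<sigma> G i)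
  then show ?case by (auto simp: cins_def intro!: tj_mtj.T_var[simplified])
next
  case (T_lam M' G t \<sigma> n)
  then show ?case using T_lam(2)[of "Suc k" M] by (auto simp: cins_Suc intro!: tj_mtj.T_lam)
next
  case (T_app G1 t P A0 n1 G2 u B n2 N G3 r \<sigma> n3 G)
  have 1: "mtj (cins k {#} G1) (lift k t) (arrs P + A0) n1" using T_app.IH by blast
  have 2: "mtj (cins k {#} G2) (lift k u) B n2" using T_app.IH by blast
  have "tj (cins (Suc k) {#} (ccons N G3)) (lift (Suc k) r) \<sigma> n3" using T_app.IH by blast
  then have 3: "tj (ccons N (cins k {#} G3)) (lift (Suc k) r) \<sigma> n3"
    by (simp add: cins_Suc)
  have 4: "cle (cadd (cadd (cins k {#} G1) (cins k {#} G2)) (cins k {#} G3)) (cins k M G)"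
    using \<open>cle (cadd (cadd G1 G2) G3) G\<close> by (simp add: cadd_cins cle_cins)
  show ?case using tj_mtj.T_app[OF 1 _ 2 _ _ 3 _ 4] T_app.hyps by simp
next
  case (M_empty G t) then show ?case by (simp add: tj_mtj.M_empty)
next
  case (M_add G1 t \<sigma> n1 G2 A n2 G)
  have "cle (cadd (cins k {#} G1) (cins k {#} G2)) (cins k M G)"
    using \<open>cle (cadd G1 G2) G\<close> by (simp add: cadd_cins cle_cins)
  moreover have "tj (cins k {#} G1) (lift k t) \<sigma> n1" "mtj (cins k {#} G2) (lift k t) A n2"
    using M_add.IH by blast+
  ultimately show ?case using tj_mtj.M_add by blast
qed

lemma lift_inv:
  "lift k t = JVar i \<Longrightarrow> \<exists>j. t = JVar j \<and> i = (if j < k then j else Suc j)"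
  "lift k t = JLam s \<Longrightarrow> \<exists>t'. t = JLam t' \<and> s = lift (Suc k) t'"
  "lift k t = JApp a b c \<Longrightarrow> \<exists>a' b' c'. t = JApp a' b' c' \<and> a = lift k a' \<and> b = lift k b' \<and> c = lift (Suc k) c'"
  by (cases t; auto split: if_splits)+

lemma strengthen_tj:
  shows "tj G s \<sigma> n \<Longrightarrow> s = lift k t \<Longrightarrow> tj (cdel k G) t \<sigma> n"
    and "mtj G s A n \<Longrightarrow> s = lift k t \<Longrightarrow> mtj (cdel k G) t A n"
proof (induction arbitrary: k t and k t rule: tj_mtj.inducts)
  case (T_var \<sigma> G i)
  then obtain j where "t = JVar j" "i = (if j < k then j else Suc j)" using lift_inv(1) by metis
  then show ?case using T_var by (auto simp: cdel_def intro!: tj_mtj.T_var[simplified])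
next
  case (T_lam M G s \<sigma> n)
  then obtain t' where "t = JLam t'" "s = lift (Suc k) t'" using lift_inv(2) by metis
  then show ?case using T_lam(2)[of "Suc k" t'] by (auto simp: cdel_Suc intro!: tj_mtj.T_lam)
next
  case (T_app G1 a P A0 n1 G2 b B n2 N G3 c \<sigma> n3 G)
  then obtain a' b' c' where e: "t = JApp a' b' c'" "a = lift k a'" "b = lift k b'" "c = lift (Suc k) c'"
    using lift_inv(3) by metis
  have 1: "mtj (cdel k G1) a' (arrs P + A0) n1" using T_app.IH e by blast
  have 2: "mtj (cdel k G2) b' B n2" using T_app.IH e by blast
  have "tj (cdel (Suc k) (ccons N G3)) c' \<sigma> n3" using T_app.IH e by blast
  then have 3: "tj (ccons N (cdel k G3)) c' \<sigma> n3" by (simp add: cdel_Suc)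
  have 4: "cle (cadd (cadd (cdel k G1) (cdel k G2)) (cdel k G3)) (cdel k G)"
    using cle_cdel[OF \<open>cle (cadd (cadd G1 G2) G3) G\<close>] by (simp add: cadd_cdel)
  show ?case using tj_mtj.T_app[OF 1 _ 2 _ _ 3 _ 4] T_app.hyps e(1)
    by simp
next
  case (M_empty G s) then show ?case by (simp add: tj_mtj.M_empty)
next
  case (M_add G1 s \<sigma> n1 G2 A n2 G)
  have "cle (cadd (cdel k G1) (cdel k G2)) (cdel k G)"
    using cle_cdel[OF \<open>cle (cadd G1 G2) G\<close>] by (simp add: cadd_cdel)
  moreover have "tj (cdel k G1) t \<sigma> n1" "mtj (cdel k G2) t A n2"
    using M_add.IH M_add.prems by blast+
  ultimately show ?case using tj_mtj.M_add by blast
qed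


lemma cle_cins_split: "cle G (cins k M G0) \<Longrightarrow> G k \<subseteq># M \<and> cle (cdel k G) G0"
proof -
  assume a: "cle G (cins k M G0)"
  have "G k \<subseteq># M" using a[unfolded cle_def, rule_format, of k] by simp
  moreover have "cle (cdel k G) G0"
    unfolding cle_def
  proof
    fix i show "cdel k G i \<subseteq># G0 i"
    proof (cases "i < k")
      case True then show ?thesis using a[unfolded cle_def, rule_format, of i] by (simp add: cins_def cdel_def)
    next
      case False then show ?thesis using a[unfolded cle_def, rule_format, of "Suc i"] by (simp add: cins_def cdel_def)
    qed
  qed
  ultimately show ?thesis by simp
qed

lemma cle_add_left: "cle (cadd G1 G2) G \<Longrightarrow> cle G1 G"
  using cle_add1 cle_trans by blast
lemma cle_add_right: "cle (cadd G1 G2) G \<Longrightarrow> cle G2 G"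
  using cle_add2 cle_trans by blast

lemma mtj_split2: "mtj D s M m \<Longrightarrow> M1 + M2 \<subseteq># M \<Longrightarrow>
  \<exists>D1 D2 m1 m2. mtj D1 s M1 m1 \<and> mtj D2 s M2 m2 \<and> cle (cadd D1 D2) D \<and> m1 + m2 \<le> m"
proof -
  assume a: "mtj D s M m" "M1 + M2 \<subseteq># M"
  obtain m' where "m' \<le> m" "mtj D s (M1 + M2) m'" using mtj_sub[OF a(2,1)] by blast
  then show ?thesis using mtj_split by fastforce
qed

lemma mtj_split3: "mtj D s M m \<Longrightarrow> M1 + M2 + M3 \<subseteq># M \<Longrightarrow>
  \<exists>D1 D2 D3 m1 m2 m3. mtj D1 s M1 m1 \<and> mtj D2 s M2 m2 \<and> mtj D3 s M3 m3 \<and>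
     cle (cadd (cadd D1 D2) D3) D \<and> m1 + m2 + m3 \<le> m"
proof -
  assume a: "mtj D s M m" "M1 + M2 + M3 \<subseteq># M"
  obtain D12 D3 m12 m3 where h: "mtj D12 s (M1 + M2) m12" "mtj D3 s M3 m3" "cle (cadd D12 D3) D" "m12 + m3 \<le> m"
    using mtj_split2[OF a] by blast
  obtain D1 D2 m1 m2 where h2: "mtj D1 s M1 m1" "mtj D2 s M2 m2" "cle (cadd D1 D2) D12" "m1 + m2 \<le> m12"
    using mtj_split2[OF h(1)] by blast
  have "cle (cadd (cadd D1 D2) D3) D" using cle_mono[OF h2(3) cle_refl] h(3) cle_trans by blast
  moreover have "m1 + m2 + m3 \<le> m" using h h2 by simp
  ultimately show ?thesis using h h2 by blast
qed

lemma subst_tj: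
  shows "tj G t \<sigma> n \<Longrightarrow> cle G (cins k M G0) \<Longrightarrow> mtj D s M m \<Longrightarrow>
           \<exists>n'. tj (cadd G0 D) (subst k s t) \<sigma> n' \<and> n' \<le> n + m"
    and "mtj G t A n \<Longrightarrow> cle G (cins k M G0) \<Longrightarrow> mtj D s M m \<Longrightarrow>
           \<exists>n'. mtj (cadd G0 D) (subst k s t) A n' \<and> n' \<le> n + m"
proof (induction arbitrary: k M G0 D s m and k M G0 D s m rule: tj_mtj.inducts)
  case (T_var \<sigma> G i)
  have c: "\<forall>j. G j \<subseteq># cins k M G0 j" using T_var(2) by (simp add: cle_def)
  show ?case
  proof (cases "i < k")
    case True
    then have "\<sigma> \<in># cadd G0 D i" using c T_var(1) by (auto simp: cins_def cadd_apply dest!: spec[of _ i] intro: mset_subset_eqD)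
    then show ?thesis using True by (auto intro: tj_mtj.T_var[simplified])
  next
    case False
    show ?thesis
    proof (cases "i = k")
      case True
      then have "\<sigma> \<in># M" using c T_var(1) by (auto dest!: spec[of _ i] intro: mset_subset_eqD)
      then obtain D1 D2 m1 m2 where h: "tj D1 s \<sigma> m1" "cle (cadd D1 D2) D" "m = m1 + m2"
        using mtj_extract[OF T_var(3)] by blast
      have "cle D1 (cadd G0 D)" using cle_add_left[OF h(2)] cle_add2 cle_trans by blast
      then have "tj (cadd G0 D) s \<sigma> m1" using tj_weaken(1)[OF h(1)] by blast
      then show ?thesis using True h(3) by (intro exI[of _ m1]) auto
    next
      case False
      then have "i > k" using \<open>\<not> i < k\<close> by simp
      then have "\<sigma> \<in># cadd G0 D (i - 1)" using c T_var(1) by (auto simp: cins_def cadd_apply dest!: spec[of _ i] intro: mset_subset_eqD)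
      then show ?thesis using \<open>i > k\<close> by (auto intro: tj_mtj.T_var[simplified])
    qed
  qed
next
  case (T_lam M' G t \<sigma> n)
  have 1: "cle (ccons M' G) (cins (Suc k) M (ccons M' G0))"
    using T_lam.prems(1) by (simp add: cins_Suc cle_ccons)
  have 2: "mtj (ccons {#} D) (lift 0 s) M m" using lift_tj(2)[OF T_lam.prems(2), of 0 "{#}"] by (simp add: cins0)
  obtain n' where "tj (cadd (ccons M' G0) (ccons {#} D)) (subst (Suc k) (lift 0 s) t) \<sigma> n'" "n' \<le> n + m"
    using T_lam.IH[OF 1 2] by blast
  then show ?case by (auto simp: ccons_cadd intro!: tj_mtj.T_lam)
next
  case (T_app G1 t P A0 n1 G2 u B n2 N G3 r \<sigma> n3 G)
  have cG: "cle (cadd (cadd G1 G2) G3) (cins k M G0)" using T_app.hyps(8) T_app.prems(1) cle_trans by blast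
  have sp: "G1 k + G2 k + G3 k \<subseteq># M" and sp2: "cle (cdel k (cadd (cadd G1 G2) G3)) G0"
    using cle_cins_split[OF cG] by (auto simp: cadd_apply)
  obtain D1 D2 D3 m1 m2 m3 where d: "mtj D1 s (G1 k) m1" "mtj D2 s (G2 k) m2" "mtj D3 s (G3 k) m3"
     "cle (cadd (cadd D1 D2) D3) D" "m1 + m2 + m3 \<le> m"
    using mtj_split3[OF T_app.prems(2) sp] by blast
  obtain n1' where a1: "mtj (cadd (cdel k G1) D1) (subst k s t) (arrs P + A0) n1'" "n1' \<le> n1 + m1"
    using T_app.IH(1)[of k "G1 k" "cdel k G1", OF _ d(1)] by (auto simp: cins_eta)
  obtain n2' where a2: "mtj (cadd (cdel k G2) D2) (subst k s u) B n2'" "n2' \<le> n2 + m2"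
    using T_app.IH(2)[of k "G2 k" "cdel k G2", OF _ d(2)] by (auto simp: cins_eta)
  have l3: "mtj (ccons {#} D3) (lift 0 s) (G3 k) m3" using lift_tj(2)[OF d(3), of 0 "{#}"] by (simp add: cins0)
  have c3: "cle (ccons N G3) (cins (Suc k) (G3 k) (ccons N (cdel k G3)))" by (simp add: cins_Suc cins_eta)
  obtain n3' where a3: "tj (cadd (ccons N (cdel k G3)) (ccons {#} D3)) (subst (Suc k) (lift 0 s) r) \<sigma> n3'"
      "n3' \<le> n3 + m3"
    using T_app.IH(3)[OF c3 l3] by blast
  have a3': "tj (ccons N (cadd (cdel k G3) D3)) (subst (Suc k) (lift 0 s) r) \<sigma> n3'"
    using a3(1) by (simp add: ccons_cadd)
  have cc: "cle (cadd (cadd (cadd (cdel k G1) D1) (cadd (cdel k G2) D2)) (cadd (cdel k G3) D3)) (cadd G0 D)"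
  proof -
    have "cadd (cadd (cadd (cdel k G1) D1) (cadd (cdel k G2) D2)) (cadd (cdel k G3) D3) =
          cadd (cdel k (cadd (cadd G1 G2) G3)) (cadd (cadd D1 D2) D3)"
      by (simp add: cadd_def cdel_def add_ac fun_eq_iff)
    then show ?thesis using cle_mono[OF sp2 d(4)] by simp
  qed
  have "tj (cadd G0 D) (JApp (subst k s t) (subst k s u) (subst (Suc k) (lift 0 s) r)) \<sigma> (Suc (n1' + n2' + n3'))"
    using tj_mtj.T_app[OF a1(1) T_app.hyps(2) a2(1) T_app.hyps(4,5) a3' T_app.hyps(7) cc] .
  then show ?case using a1(2) a2(2) a3(2) d(5) by (intro exI[of _ "Suc (n1' + n2' + n3')"]) auto
next
  case (M_empty G t) then show ?case using tj_mtj.M_empty by auto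
next
  case (M_add G1 t \<sigma> n1 G2 A n2 G)
  have cG: "cle (cadd G1 G2) (cins k M G0)" using M_add.hyps(3) M_add.prems(1) cle_trans by blast
  have sp: "G1 k + G2 k \<subseteq># M" and sp2: "cle (cdel k (cadd G1 G2)) G0"
    using cle_cins_split[OF cG] by (auto simp: cadd_apply)
  obtain D1 D2 m1 m2 where d: "mtj D1 s (G1 k) m1" "mtj D2 s (G2 k) m2"
     "cle (cadd D1 D2) D" "m1 + m2 \<le> m"
    using mtj_split2[OF M_add.prems(2) sp] by blast
  obtain n1' where a1: "tj (cadd (cdel k G1) D1) (subst k s t) \<sigma> n1'" "n1' \<le> n1 + m1"
    using M_add.IH(1)[of k "G1 k" "cdel k G1", OF _ d(1)] by (auto simp: cins_eta)
  obtain n2' where a2: "mtj (cadd (cdel k G2) D2) (subst k s t) A n2'" "n2' \<le> n2 + m2"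
    using M_add.IH(2)[of k "G2 k" "cdel k G2", OF _ d(2)] by (auto simp: cins_eta)
  have cc: "cle (cadd (cadd (cdel k G1) D1) (cadd (cdel k G2) D2)) (cadd G0 D)"
  proof -
    have "cadd (cadd (cdel k G1) D1) (cadd (cdel k G2) D2) = cadd (cdel k (cadd G1 G2)) (cadd D1 D2)"
      by (simp add: cadd_def cdel_def add_ac fun_eq_iff)
    then show ?thesis using cle_mono[OF sp2 d(3)] by simp
  qed
  show ?case using tj_mtj.M_add[OF a1(1) a2(1) cc] a1(2) a2(2) d(4)
    by (intro exI[of _ "n1' + n2'"]) auto
qed


lemma cle_at1: "cle (cadd G1 D) G \<Longrightarrow> G1 i \<subseteq># G i"
  by (metis cle_add_left cle_def)

lemma mtj_anti_gen:
  assumes h: "\<forall>G \<sigma> n. tj G (subst k s t) \<sigma> n \<longrightarrow>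
     (\<exists>M G1 D n1 m. tj (cins k M G1) t \<sigma> n1 \<and> mtj D s M m \<and> cle (cadd G1 D) G)"
  shows "mtj G X A n \<Longrightarrow> X = subst k s t \<Longrightarrow>
     \<exists>M G1 D n1 m. mtj (cins k M G1) t A n1 \<and> mtj D s M m \<and> cle (cadd G1 D) G"
proof (induction rule: tj_mtj.inducts(2)[where ?P1.0="\<lambda>_ _ _ _. True"])
  case (M_empty G t')
  have "mtj (cins k {#} cemp) t {#} 0 \<and> mtj cemp s {#} 0 \<and> cle (cadd cemp cemp) G"
    by (simp add: tj_mtj.M_empty)
  then show ?case by blast
next
  case (M_add H1 X \<sigma> n1 H2 A n2 G)
  obtain M1 K1 D1 k1 m1 where a: "tj (cins k M1 K1) t \<sigma> k1" "mtj D1 s M1 m1" "cle (cadd K1 D1) H1"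
    using h M_add by meson
  obtain M2 K2 D2 k2 m2 where b: "mtj (cins k M2 K2) t A k2" "mtj D2 s M2 m2" "cle (cadd K2 D2) H2"
    using M_add by blast
  have "mtj (cins k (M1 + M2) (cadd K1 K2)) t (add_mset \<sigma> A) (k1 + k2)"
    by (rule tj_mtj.M_add[OF a(1) b(1)]) (simp add: cadd_cins)
  moreover have "mtj (cadd D1 D2) s (M1 + M2) (m1 + m2)" using mtj_union[OF a(2) b(2)] .
  moreover have "cle (cadd (cadd K1 K2) (cadd D1 D2)) G"
  proof -
    have "cadd (cadd K1 K2) (cadd D1 D2) = cadd (cadd K1 D1) (cadd K2 D2)"
      by (simp add: cadd_def add_ac fun_eq_iff)
    then show ?thesis using cle_mono[OF a(3) b(3)] \<open>cle (cadd H1 H2) G\<close> cle_trans by metis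
  qed
  ultimately show ?case by blast
qed simp

lemma antisubst: "tj G (subst k s t) \<sigma> n \<Longrightarrow>
   \<exists>M G1 D n1 m. tj (cins k M G1) t \<sigma> n1 \<and> mtj D s M m \<and> cle (cadd G1 D) G"
proof (induction t arbitrary: k s G \<sigma> n)
  case (JVar i)
  show ?case
  proof (cases "i < k")
    case True
    then have "tj G (JVar i) \<sigma> n" using JVar by simp
    then have "\<sigma> \<in># G i" by (auto elim: tj_varE)
    then have "tj (cins k {#} G) (JVar i) \<sigma> 1" using True by (auto simp: cins_def intro: T_var[simplified])
    moreover have "mtj cemp s {#} 0" by (rule M_empty)
    ultimately show ?thesis by fastforce
  next
    case False
    show ?thesis
    proof (cases "i = k")
      case True
      then have "tj G s \<sigma> n" using JVar by simp
      then have "mtj G s {#\<sigma>#} n" by (rule mtj_single)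
      moreover have "tj (cins k {#\<sigma>#} cemp) (JVar i) \<sigma> 1" using True by (auto intro: T_var[simplified])
      ultimately show ?thesis by fastforce
    next
      case False
      then have "tj G (JVar (i - 1)) \<sigma> n" using JVar \<open>\<not> i < k\<close> by simp
      then have "\<sigma> \<in># G (i - 1)" by (auto elim: tj_varE)
      then have "tj (cins k {#} G) (JVar i) \<sigma> 1" using False \<open>\<not> i < k\<close> by (auto simp: cins_def intro: T_var[simplified])
      moreover have "mtj cemp s {#} 0" by (rule M_empty)
      ultimately show ?thesis by fastforce
    qed
  qed
next
  case (JLam t)
  then have "tj G (JLam (subst (Suc k) (lift 0 s) t)) \<sigma> n" by simp
  then obtain M' \<sigma>' n0 where e: "\<sigma> = Arr M' \<sigma>'" "tj (ccons M' G) (subst (Suc k) (lift 0 s) t) \<sigma>' n0"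
    by (auto elim: tj_lamE)
  obtain M G1 D n1 m where h: "tj (cins (Suc k) M G1) t \<sigma>' n1" "mtj D (lift 0 s) M m" "cle (cadd G1 D) (ccons M' G)"
    using JLam.IH[OF e(2)] by blast
  have s: "mtj (cdel 0 D) s M m" using strengthen_tj(2)[OF h(2) refl] .
  have c0: "G1 0 \<subseteq># M'" using cle_at1[OF h(3), of 0] by simp
  have "cins (Suc k) M G1 = ccons (G1 0) (cins k M (cdel 0 G1))"
    by (metis ccons_eta cins_Suc)
  then have "tj (ccons (G1 0) (cins k M (cdel 0 G1))) t \<sigma>' n1" using h(1) by simp
  then have "tj (ccons M' (cins k M (cdel 0 G1))) t \<sigma>' n1"
    by (rule tj_weaken(1)) (simp add: cle_ccons c0)
  then have "tj (cins k M (cdel 0 G1)) (JLam t) \<sigma> (Suc n1)" using e(1) by (auto intro: T_lam)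
  moreover have "cle (cadd (cdel 0 G1) (cdel 0 D)) G"
    using cle_cdel[OF h(3), of 0] by (simp add: cadd_cdel)
  ultimately show ?case using s by blast
next
  case (JApp t1 t2 t3)
  then have "tj G (JApp (subst k s t1) (subst k s t2) (subst (Suc k) (lift 0 s) t3)) \<sigma> n" by simp
  then obtain G1 P A0 n1 G2 B n2 N G3 n3 where e: "mtj G1 (subst k s t1) (arrs P + A0) n1" "arrs P + A0 \<noteq> {#}"
    "mtj G2 (subst k s t2) B n2" "B \<noteq> {#}" "doms P \<subseteq># B"
    "tj (ccons N G3) (subst (Suc k) (lift 0 s) t3) \<sigma> n3" "N \<subseteq># cods P" "cle (cadd (cadd G1 G2) G3) G"
    by (elim tj_appE) blast
  have h1: "\<forall>G \<sigma> n. tj G (subst k s t1) \<sigma> n \<longrightarrow>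
     (\<exists>M G1 D n1 m. tj (cins k M G1) t1 \<sigma> n1 \<and> mtj D s M m \<and> cle (cadd G1 D) G)"
    using JApp.IH(1) by blast
  have h2: "\<forall>G \<sigma> n. tj G (subst k s t2) \<sigma> n \<longrightarrow>
     (\<exists>M G1 D n1 m. tj (cins k M G1) t2 \<sigma> n1 \<and> mtj D s M m \<and> cle (cadd G1 D) G)"
    using JApp.IH(2) by blast
  obtain M1 K1 D1 k1 m1 where a: "mtj (cins k M1 K1) t1 (arrs P + A0) k1" "mtj D1 s M1 m1" "cle (cadd K1 D1) G1"
    using mtj_anti_gen[OF h1 e(1) refl] by blast
  obtain M2 K2 D2 k2 m2 where b: "mtj (cins k M2 K2) t2 B k2" "mtj D2 s M2 m2" "cle (cadd K2 D2) G2"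
    using mtj_anti_gen[OF h2 e(3) refl] by blast
  obtain M3 K3 D3 k3 m3 where c: "tj (cins (Suc k) M3 K3) t3 \<sigma> k3" "mtj D3 (lift 0 s) M3 m3" "cle (cadd K3 D3) (ccons N G3)"
    using JApp.IH(3)[OF e(6)] by blast
  have s3: "mtj (cdel 0 D3) s M3 m3" using strengthen_tj(2)[OF c(2) refl] .
  have c0: "K3 0 \<subseteq># N" using cle_at1[OF c(3), of 0] by simp
  have "cins (Suc k) M3 K3 = ccons (K3 0) (cins k M3 (cdel 0 K3))"
    by (metis ccons_eta cins_Suc)
  then have "tj (ccons (K3 0) (cins k M3 (cdel 0 K3))) t3 \<sigma> k3" using c(1) by simp
  then have c': "tj (ccons N (cins k M3 (cdel 0 K3))) t3 \<sigma> k3"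
    by (rule tj_weaken(1)) (simp add: cle_ccons c0)
  have cc: "cle (cadd (cadd (cins k M1 K1) (cins k M2 K2)) (cins k M3 (cdel 0 K3)))
     (cins k (M1 + M2 + M3) (cadd (cadd K1 K2) (cdel 0 K3)))"
    by (simp add: cadd_cins)
  have "tj (cins k (M1 + M2 + M3) (cadd (cadd K1 K2) (cdel 0 K3))) (JApp t1 t2 t3) \<sigma> (Suc (k1 + k2 + k3))"
    by (rule T_app[OF a(1) e(2) b(1) e(4,5) c' e(7) cc])
  moreover have "mtj (cadd (cadd D1 D2) (cdel 0 D3)) s (M1 + M2 + M3) (m1 + m2 + m3)"
    using mtj_union[OF mtj_union[OF a(2) b(2)] s3] .
  moreover have "cle (cadd (cadd (cadd K1 K2) (cdel 0 K3)) (cadd (cadd D1 D2) (cdel 0 D3))) G"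
  proof -
    have "cadd (cadd (cadd K1 K2) (cdel 0 K3)) (cadd (cadd D1 D2) (cdel 0 D3)) =
          cadd (cadd (cadd K1 D1) (cadd K2 D2)) (cdel 0 (cadd K3 D3))"
      by (simp add: cadd_def cdel_def add_ac fun_eq_iff)
    moreover have "cle (cadd (cadd (cadd K1 D1) (cadd K2 D2)) (cdel 0 (cadd K3 D3))) (cadd (cadd G1 G2) G3)"
      using cle_mono[OF cle_mono[OF a(3) b(3)] cle_cdel[OF c(3), of 0]] by simp
    ultimately show ?thesis using e(8) cle_trans by metis
  qed
  ultimately show ?case by blast
qed

abbreviation shiftn :: "nat \<Rightarrow> ctx \<Rightarrow> ctx" where "shiftn k E \<equiv> (ccons {#} ^^ k) E"

lemma plug_dec: "tj G (plug D X) \<tau> n \<Longrightarrow> \<exists>GX nX. tj GX X \<tau> nX \<and> nX \<le> n \<and>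
   (\<forall>X' \<tau>' E n'. tj (cadd GX (shiftn (length D) E)) X' \<tau>' n' \<longrightarrow> tj (cadd G E) (plug D X') \<tau>' (n - nX + n'))"
proof (induction D arbitrary: G \<tau> n)
  case Nil
  then show ?case by (intro exI[of _ G] exI[of _ n]) auto
next
  case (Cons p D)
  obtain a b where p: "p = (a, b)" by fastforce
  then have "tj G (JApp a b (plug D X)) \<tau> n" using Cons by simp
  then obtain G1 P A0 n1 G2 B n2 N G3 n3 where e: "mtj G1 a (arrs P + A0) n1" "arrs P + A0 \<noteq> {#}"
    "mtj G2 b B n2" "B \<noteq> {#}" "doms P \<subseteq># B"
    "tj (ccons N G3) (plug D X) \<tau> n3" "N \<subseteq># cods P" "cle (cadd (cadd G1 G2) G3) G" "n = Suc (n1 + n2 + n3)"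
    by (elim tj_appE) blast
  obtain GX nX where i: "tj GX X \<tau> nX" "nX \<le> n3"
    "\<forall>X' \<tau>' E n'. tj (cadd GX (shiftn (length D) E)) X' \<tau>' n' \<longrightarrow> tj (cadd (ccons N G3) E) (plug D X') \<tau>' (n3 - nX + n')"
    using Cons.IH[OF e(6)] by blast
  have "\<forall>X' \<tau>' E n'. tj (cadd GX (shiftn (length (p # D)) E)) X' \<tau>' n' \<longrightarrow> tj (cadd G E) (plug (p # D) X') \<tau>' (n - nX + n')"
  proof (intro allI impI)
    fix X' \<tau>' E n'
    assume "tj (cadd GX (shiftn (length (p # D)) E)) X' \<tau>' n'"
    then have "tj (cadd GX (shiftn (length D) (ccons {#} E))) X' \<tau>' n'" by (simp add: funpow_swap1)
    then have "tj (cadd (ccons N G3) (ccons {#} E)) (plug D X') \<tau>' (n3 - nX + n')" using i(3) by blast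
    then have t3: "tj (ccons N (cadd G3 E)) (plug D X') \<tau>' (n3 - nX + n')" by (simp add: ccons_cadd)
    have cc: "cle (cadd (cadd G1 G2) (cadd G3 E)) (cadd G E)"
      using cle_mono[OF e(8) cle_refl[of E]] by (simp add: cadd_assoc)
    have F: "tj (cadd G E) (JApp a b (plug D X')) \<tau>' (Suc (n1 + n2 + (n3 - nX + n')))"
      by (rule T_app[OF e(1,2,3,4,5) t3 e(7) cc])
    have eq: "Suc (n1 + n2 + (n3 - nX + n')) = n - nX + n'" using e(9) i(2) by simp
    show "tj (cadd G E) (plug (p # D) X') \<tau>' (n - nX + n')" using F p unfolding eq by simp
  qed
  then show ?case using i(1,2) e(9) by (intro exI[of _ GX] exI[of _ nX]) auto
qed

lemma plug_lam_arr: "tj G (plug D (JLam v)) \<rho> n \<Longrightarrow> \<exists>M \<tau>. \<rho> = Arr M \<tau>"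
  using plug_dec[of G D "JLam v" \<rho> n] by (auto elim: tj_lamE)


lemma subset_image_mset_ex: "N \<subseteq># image_mset f P \<Longrightarrow> \<exists>P'. P' \<subseteq># P \<and> image_mset f P' = N"
proof (induction N arbitrary: P)
  case empty then show ?case by (intro exI[of _ "{#}"]) auto
next
  case (add x N)
  then have "x \<in># image_mset f P" by (meson insert_subset_eq_iff)
  then obtain p where p: "p \<in># P" "f p = x" by auto
  have "N \<subseteq># image_mset f P - {#x#}" using add.prems by (simp add: insert_subset_eq_iff)
  also have "\<dots> = image_mset f (P - {#p#})" using p by (simp add: image_mset_Diff)
  finally obtain P0 where "P0 \<subseteq># P - {#p#}" "image_mset f P0 = N" using add.IH by blast
  then have "add_mset p P0 \<subseteq># P" "image_mset f (add_mset p P0) = add_mset x N"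
    using p by (auto simp: insert_subset_eq_iff)
  then show ?case by blast
qed

lemma doms_mono: "P' \<subseteq># P \<Longrightarrow> doms P' \<subseteq># doms P"
  by (metis doms_simps(3) mset_subset_eq_add_left subset_mset.add_diff_inverse)
lemma arrs_mono: "P' \<subseteq># P \<Longrightarrow> arrs P' \<subseteq># arrs P"
  by (simp add: arrs_def image_mset_subseteq_mono)
lemma size_arrs[simp]: "size (arrs P) = size P" by (simp add: arrs_def)
lemma size_cods[simp]: "size (cods P) = size P" by (simp add: cods_def)

lemma lift_n_mtj: "mtj G u A m \<Longrightarrow> mtj (shiftn k G) ((lift 0 ^^ k) u) A m"
proof (induction k)
  case 0 then show ?case by simp
next
  case (Suc k)
  then show ?case using lift_tj(2)[OF Suc.IH, of 0 "{#}"] by (simp add: cins0)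
qed

lemma sr_dbeta_key: "mtj Ga (plug D (JLam v)) (arrs P) na \<Longrightarrow> mtj Gu u (doms P) nu \<Longrightarrow>
  \<exists>m. mtj (cadd Ga Gu) (plug D (subst 0 ((lift 0 ^^ length D) u) v)) (cods P) m \<and> m + size P \<le> na + nu"
proof (induction P arbitrary: Ga Gu na nu)
  case empty
  then show ?case using M_empty by fastforce
next
  case (add p P)
  obtain M \<tau> where p: "p = (M, \<tau>)" by fastforce
  obtain Ga1 Ga2 d na2 where a: "tj Ga1 (plug D (JLam v)) (Arr M \<tau>) d" "mtj Ga2 (plug D (JLam v)) (arrs P) na2"
     "cle (cadd Ga1 Ga2) Ga" "na = d + na2"
    using mtj_extract[OF add.prems(1), of "Arr M \<tau>"] p by auto
  obtain Gu1 Gu2 mu1 mu2 where b: "mtj Gu1 u M mu1" "mtj Gu2 u (doms P) mu2" "cle (cadd Gu1 Gu2) Gu" "nu = mu1 + mu2"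
    using mtj_split[of Gu u M "doms P" nu] add.prems(2) p by auto
  obtain GX nX where x: "tj GX (JLam v) (Arr M \<tau>) nX" "nX \<le> d"
    "\<forall>X' \<tau>' E n'. tj (cadd GX (shiftn (length D) E)) X' \<tau>' n' \<longrightarrow> tj (cadd Ga1 E) (plug D X') \<tau>' (d - nX + n')"
    using plug_dec[OF a(1)] by blast
  obtain n0 where v: "tj (ccons M GX) v \<tau> n0" "nX = Suc n0" using x(1) by (auto elim: tj_lamE)
  have lu: "mtj (shiftn (length D) Gu1) ((lift 0 ^^ length D) u) M mu1" by (rule lift_n_mtj[OF b(1)])
  obtain n' where s: "tj (cadd GX (shiftn (length D) Gu1)) (subst 0 ((lift 0 ^^ length D) u) v) \<tau> n'" "n' \<le> n0 + mu1"
    using subst_tj(1)[OF v(1) _ lu, of 0 GX] by (auto simp: cins0)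
  have t1: "tj (cadd Ga1 Gu1) (plug D (subst 0 ((lift 0 ^^ length D) u) v)) \<tau> (d - nX + n')"
    using x(3) s(1) by blast
  obtain m where ih: "mtj (cadd Ga2 Gu2) (plug D (subst 0 ((lift 0 ^^ length D) u) v)) (cods P) m" "m + size P \<le> na2 + mu2"
    using add.IH[OF a(2) b(2)] by blast
  have cc: "cle (cadd (cadd Ga1 Gu1) (cadd Ga2 Gu2)) (cadd Ga Gu)"
  proof -
    have "cadd (cadd Ga1 Gu1) (cadd Ga2 Gu2) = cadd (cadd Ga1 Ga2) (cadd Gu1 Gu2)"
      by (simp add: cadd_def add_ac fun_eq_iff)
    then show ?thesis using cle_mono[OF a(3) b(3)] by simp
  qed
  have "mtj (cadd Ga Gu) (plug D (subst 0 ((lift 0 ^^ length D) u) v)) (add_mset \<tau> (cods P)) (d - nX + n' + m)"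
    by (rule M_add[OF t1 ih(1) cc])
  moreover have "d - nX + n' + m + size (add_mset p P) \<le> na + nu"
    using ih(2) s(2) v(2) x(2) a(4) b(4) by simp
  ultimately show ?case using p by (intro exI[of _ "d - nX + n' + m"]) auto
qed

lemma sr_dbeta_root: "tj G R \<sigma> n \<Longrightarrow> dbeta_rule R R' \<Longrightarrow> \<exists>n'. n' < n \<and> tj G R' \<sigma> n'"
proof -
  assume h: "tj G R \<sigma> n" "dbeta_rule R R'"
  from h(2) obtain D t u r where rule: "R = JApp (plug D (JLam t)) u r"
     "R' = subst 0 (plug D (subst 0 ((lift 0 ^^ length D) u) t)) r"
    by (cases rule: dbeta_rule.cases) auto
  obtain G1 P A0 n1 G2 B n2 N G3 n3 where e: "mtj G1 (plug D (JLam t)) (arrs P + A0) n1" "arrs P + A0 \<noteq> {#}"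
    "mtj G2 u B n2" "B \<noteq> {#}" "doms P \<subseteq># B"
    "tj (ccons N G3) r \<sigma> n3" "N \<subseteq># cods P" "cle (cadd (cadd G1 G2) G3) G" "n = Suc (n1 + n2 + n3)"
    using h(1) unfolding rule(1) by (elim tj_appE) blast
  obtain P' where P': "P' \<subseteq># P" "cods P' = N" using subset_image_mset_ex[of N snd P] e(7) by (auto simp: cods_def)
  obtain n1' where a: "n1' \<le> n1" "mtj G1 (plug D (JLam t)) (arrs P') n1'"
    using mtj_sub[OF subset_mset.order_trans[OF arrs_mono[OF P'(1)] mset_subset_eq_add_left] e(1)] by blast
  obtain n2' where b: "n2' \<le> n2" "mtj G2 u (doms P') n2'"
    using mtj_sub[OF _ e(3), of "doms P'"] doms_mono[OF P'(1)] e(5) subset_mset.order_trans by blast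
  obtain m where k: "mtj (cadd G1 G2) (plug D (subst 0 ((lift 0 ^^ length D) u) t)) N m" "m + size P' \<le> n1' + n2'"
    using sr_dbeta_key[OF a(2) b(2)] P'(2) by blast
  obtain n' where s: "tj (cadd G3 (cadd G1 G2)) (subst 0 (plug D (subst 0 ((lift 0 ^^ length D) u) t)) r) \<sigma> n'"
     "n' \<le> n3 + m"
    using subst_tj(1)[OF e(6) _ k(1), of 0 G3] by (auto simp: cins0)
  have "cle (cadd G3 (cadd G1 G2)) G" using e(8) by (simp add: cadd_comm)
  then have "tj G (subst 0 (plug D (subst 0 ((lift 0 ^^ length D) u) t)) r) \<sigma> n'" using tj_weaken(1)[OF s(1)] by blast
  moreover have "n' < n" using s(2) k(2) a(1) b(1) e(9) by simp
  ultimately show ?thesis using rule(2) by blast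
qed

lemma mtj_step_gen:
  assumes h: "\<forall>G \<sigma> n. tj G t \<sigma> n \<longrightarrow> (\<exists>n'. n' + c \<le> n \<and> tj G s \<sigma> n')"
  shows "mtj G X A n \<Longrightarrow> X = t \<Longrightarrow> \<exists>n'. n' + c * size A \<le> n \<and> mtj G s A n'"
proof (induction rule: tj_mtj.inducts(2)[where ?P1.0="\<lambda>_ _ _ _. True"])
  case (M_empty G t) then show ?case using tj_mtj.M_empty by auto
next
  case (M_add G1 X \<sigma> n1 G2 A n2 G)
  obtain n1' where a: "n1' + c \<le> n1" "tj G1 s \<sigma> n1'" using h M_add by meson
  obtain n2' where b: "n2' + c * size A \<le> n2" "mtj G2 s A n2'" using M_add by blast
  have "mtj G s (add_mset \<sigma> A) (n1' + n2')" by (rule tj_mtj.M_add[OF a(2) b(2) \<open>cle (cadd G1 G2) G\<close>])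
  then show ?case using a(1) b(1) by (intro exI[of _ "n1' + n2'"]) auto
qed simp

lemma sr_ctx:
  assumes root: "\<And>G t t' \<sigma> n. tj G t \<sigma> n \<Longrightarrow> \<rho> t t' \<Longrightarrow> \<exists>n'. n' + c \<le> n \<and> tj G t' \<sigma> n'"
  shows "ctx_clos \<rho> t t' \<Longrightarrow> tj G t \<sigma> n \<Longrightarrow> \<exists>n'. n' + c \<le> n \<and> tj G t' \<sigma> n'"
proof (induction arbitrary: G \<sigma> n rule: ctx_clos.induct)
  case (root t s) then show ?case using assms by blast
next
  case (lam t s)
  obtain M \<sigma>' n0 where e: "\<sigma> = Arr M \<sigma>'" "tj (ccons M G) t \<sigma>' n0" "n = Suc n0"
    using lam.prems by (auto elim: tj_lamE)
  obtain n' where "n' + c \<le> n0" "tj (ccons M G) s \<sigma>' n'" using lam.IH[OF e(2)] by blast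
  then show ?case using e by (intro exI[of _ "Suc n'"]) (auto intro: T_lam)
next
  case (app1 t s u r)
  obtain G1 P A0 n1 G2 B n2 N G3 n3 where e: "mtj G1 t (arrs P + A0) n1" "arrs P + A0 \<noteq> {#}"
    "mtj G2 u B n2" "B \<noteq> {#}" "doms P \<subseteq># B"
    "tj (ccons N G3) r \<sigma> n3" "N \<subseteq># cods P" "cle (cadd (cadd G1 G2) G3) G" "n = Suc (n1 + n2 + n3)"
    using app1.prems by (elim tj_appE) blast
  obtain n1' where a: "n1' + c * size (arrs P + A0) \<le> n1" "mtj G1 s (arrs P + A0) n1'"
    using mtj_step_gen[of t c s, OF _ e(1) refl] app1.IH by blast
  have "1 \<le> size (arrs P + A0)" using e(2) by (cases "arrs P + A0") auto
  then have "c \<le> c * size (arrs P + A0)" by (metis mult.right_neutral mult_le_mono2)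
  then have "Suc (n1' + n2 + n3) + c \<le> n" using a(1) e(9) by linarith
  then show ?case using T_app[OF a(2) e(2,3,4,5,6,7,8)] by blast
next
  case (app2 u s t r)
  obtain G1 P A0 n1 G2 B n2 N G3 n3 where e: "mtj G1 t (arrs P + A0) n1" "arrs P + A0 \<noteq> {#}"
    "mtj G2 u B n2" "B \<noteq> {#}" "doms P \<subseteq># B"
    "tj (ccons N G3) r \<sigma> n3" "N \<subseteq># cods P" "cle (cadd (cadd G1 G2) G3) G" "n = Suc (n1 + n2 + n3)"
    using app2.prems by (elim tj_appE) blast
  obtain n2' where a: "n2' + c * size B \<le> n2" "mtj G2 s B n2'"
    using mtj_step_gen[of u c s, OF _ e(3) refl] app2.IH by blast
  have "1 \<le> size B" using e(4) by (cases B) auto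
  then have "c \<le> c * size B" by (metis mult.right_neutral mult_le_mono2)
  then have "Suc (n1 + n2' + n3) + c \<le> n" using a(1) e(9) by linarith
  then show ?case using T_app[OF e(1,2) a(2) e(4,5,6,7,8)] by blast
next
  case (app3 r s t u)
  obtain G1 P A0 n1 G2 B n2 N G3 n3 where e: "mtj G1 t (arrs P + A0) n1" "arrs P + A0 \<noteq> {#}"
    "mtj G2 u B n2" "B \<noteq> {#}" "doms P \<subseteq># B"
    "tj (ccons N G3) r \<sigma> n3" "N \<subseteq># cods P" "cle (cadd (cadd G1 G2) G3) G" "n = Suc (n1 + n2 + n3)"
    using app3.prems by (elim tj_appE) blast
  obtain n3' where a: "n3' + c \<le> n3" "tj (ccons N G3) s \<sigma> n3'" using app3.IH[OF e(6)] by blast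
  then show ?case using T_app[OF e(1,2,3,4,5) a(2) e(7,8)] e(9)
    by (intro exI[of _ "Suc (n1 + n2 + n3')"]) auto
qed

lemma sr_dbeta: "step_dbeta t t' \<Longrightarrow> tj G t \<sigma> n \<Longrightarrow> \<exists>n'. n' < n \<and> tj G t' \<sigma> n'"
proof -
  assume a: "step_dbeta t t'" "tj G t \<sigma> n"
  have root: "\<And>G t t' \<sigma> n. tj G t \<sigma> n \<Longrightarrow> dbeta_rule t t' \<Longrightarrow> \<exists>n'. n' + 1 \<le> n \<and> tj G t' \<sigma> n'"
    using sr_dbeta_root by (metis Suc_eq_plus1 Suc_le_eq)
  have "\<exists>n'. n' + 1 \<le> n \<and> tj G t' \<sigma> n'"
    using sr_ctx[OF root] a by (auto simp: step_dbeta_def)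
  then obtain n' where "n' + 1 \<le> n" "tj G t' \<sigma> n'" by blast
  then show ?thesis by (intro exI[of _ n']) auto
qed


lemma pi_merge: "mtj G X A n \<Longrightarrow> X = JApp t u r \<Longrightarrow> A \<noteq> {#} \<Longrightarrow>
  \<exists>Q Q0 Bq Nq Ga Gb Gc na nb nc. mtj Ga t (arrs Q + Q0) na \<and> arrs Q + Q0 \<noteq> {#} \<and> mtj Gb u Bq nb \<and> Bq \<noteq> {#} \<and>
     doms Q \<subseteq># Bq \<and> mtj (ccons Nq Gc) r A nc \<and> Nq \<subseteq># cods Q \<and>
     cle (cadd (cadd Ga Gb) Gc) G \<and> na + nb + nc + size A \<le> n"
proof (induction rule: tj_mtj.inducts(2)[where ?P1.0="\<lambda>_ _ _ _. True"])
  case (M_empty G X)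
  note M_empty.prems[simplified]
  then show ?case by simp
next
  case (M_add H1 X \<sigma> n1 H2 A n2 G)
  obtain Q1 A1 B1 N1 Ga1 Gb1 Gc1 na1 nb1 nc1 where e: "mtj Ga1 t (arrs Q1 + A1) na1" "arrs Q1 + A1 \<noteq> {#}"
    "mtj Gb1 u B1 nb1" "B1 \<noteq> {#}" "doms Q1 \<subseteq># B1"
    "tj (ccons N1 Gc1) r \<sigma> nc1" "N1 \<subseteq># cods Q1" "cle (cadd (cadd Ga1 Gb1) Gc1) H1" "n1 = Suc (na1 + nb1 + nc1)"
    using M_add.hyps(1) unfolding M_add.prems(1) by (elim tj_appE) blast
  show ?case
  proof (cases "A = {#}")
    case True
    have "mtj (ccons N1 Gc1) r (add_mset \<sigma> A) nc1" using mtj_single[OF e(6)] True by simp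
    moreover have "cle (cadd (cadd Ga1 Gb1) Gc1) G"
      using e(8) cle_add_left[OF \<open>cle (cadd H1 H2) G\<close>] cle_trans by blast
    moreover have "na1 + nb1 + nc1 + size (add_mset \<sigma> A) \<le> n1 + n2" using e(9) True by simp
    ultimately show ?thesis using e by blast
  next
    case False
    obtain Q2 A2 B2 N2 Ga2 Gb2 Gc2 na2 nb2 nc2 where f: "mtj Ga2 t (arrs Q2 + A2) na2" "arrs Q2 + A2 \<noteq> {#}"
      "mtj Gb2 u B2 nb2" "B2 \<noteq> {#}" "doms Q2 \<subseteq># B2"
      "mtj (ccons N2 Gc2) r A nc2" "N2 \<subseteq># cods Q2" "cle (cadd (cadd Ga2 Gb2) Gc2) H2" "na2 + nb2 + nc2 + size A \<le> n2"
      using M_add.IH M_add.prems(1) False by blast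
    have 1: "mtj (cadd Ga1 Ga2) t (arrs (Q1 + Q2) + (A1 + A2)) (na1 + na2)" using mtj_union[OF e(1) f(1)] by (simp add: add_ac)
    have 0: "arrs (Q1 + Q2) + (A1 + A2) \<noteq> {#}" using e(2) by auto
    have 2: "mtj (cadd Gb1 Gb2) u (B1 + B2) (nb1 + nb2)" using mtj_union[OF e(3) f(3)] .
    have 3: "doms (Q1 + Q2) \<subseteq># B1 + B2" using e(5) f(5) by (simp add: subset_mset.add_mono)
    have 4: "mtj (ccons (N1 + N2) (cadd Gc1 Gc2)) r (add_mset \<sigma> A) (nc1 + nc2)"
      by (rule tj_mtj.M_add[OF e(6) f(6)]) (simp add: ccons_cadd)
    have 5: "N1 + N2 \<subseteq># cods (Q1 + Q2)" using e(7) f(7) by (simp add: subset_mset.add_mono)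
    have 6: "cle (cadd (cadd (cadd Ga1 Ga2) (cadd Gb1 Gb2)) (cadd Gc1 Gc2)) G"
    proof -
      have "cadd (cadd (cadd Ga1 Ga2) (cadd Gb1 Gb2)) (cadd Gc1 Gc2) =
            cadd (cadd (cadd Ga1 Gb1) Gc1) (cadd (cadd Ga2 Gb2) Gc2)"
        by (simp add: cadd_def add_ac fun_eq_iff)
      then show ?thesis using cle_mono[OF e(8) f(8)] \<open>cle (cadd H1 H2) G\<close> cle_trans by metis
    qed
    have 7: "(na1 + na2) + (nb1 + nb2) + (nc1 + nc2) + size (add_mset \<sigma> A) \<le> n1 + n2"
      using e(9) f(9) by simp
    show ?thesis using 0 1 2 3 4 5 6 7 e(4) by blast
  qed
qed (use nothing in \<open>auto\<close>)

lemma sr_pi_root: "tj G R \<sigma> n \<Longrightarrow> pi_rule R R' \<Longrightarrow> \<exists>n'. n' + 0 \<le> n \<and> tj G R' \<sigma> n'"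
proof -
  assume h: "tj G R \<sigma> n" "pi_rule R R'"
  from h(2) obtain t u r u' r' where rule: "R = JApp (JApp t u r) u' r'"
     "R' = JApp t u (JApp r (lift 0 u') (lift 1 r'))"
    by (cases rule: pi_rule.cases) auto
  obtain G1 P A0 n1 G2 B n2 N G3 n3 where e: "mtj G1 (JApp t u r) (arrs P + A0) n1" "arrs P + A0 \<noteq> {#}"
    "mtj G2 u' B n2" "B \<noteq> {#}" "doms P \<subseteq># B"
    "tj (ccons N G3) r' \<sigma> n3" "N \<subseteq># cods P" "cle (cadd (cadd G1 G2) G3) G" "n = Suc (n1 + n2 + n3)"
    using h(1) unfolding rule(1) by (elim tj_appE) blast
  from pi_merge[OF e(1) refl e(2)] obtain Q Q0 Bq Nq Ga Gb Gc na nb nc where m: "mtj Ga t (arrs Q + Q0) na" "arrs Q + Q0 \<noteq> {#}" "mtj Gb u Bq nb" "Bq \<noteq> {#}"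
     "doms Q \<subseteq># Bq" "mtj (ccons Nq Gc) r (arrs P + A0) nc" "Nq \<subseteq># cods Q"
     "cle (cadd (cadd Ga Gb) Gc) G1" "na + nb + nc + size (arrs P + A0) \<le> n1"
    by blast
  have lu: "mtj (ccons {#} G2) (lift 0 u') B n2" using lift_tj(2)[OF e(3), of 0 "{#}"] by (simp add: cins0)
  have lr: "tj (ccons N (ccons {#} G3)) (lift 1 r') \<sigma> n3"
    using lift_tj(1)[OF e(6), of 1 "{#}"] by (simp add: cins0 cins_Suc[of 0, simplified])
  have ci: "cle (cadd (cadd (ccons Nq Gc) (ccons {#} G2)) (ccons {#} G3)) (ccons Nq (cadd (cadd Gc G2) G3))"
    by (simp add: ccons_cadd)
  have inner: "tj (ccons Nq (cadd (cadd Gc G2) G3)) (JApp r (lift 0 u') (lift 1 r')) \<sigma> (Suc (nc + n2 + n3))"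
    by (rule T_app[OF m(6) e(2) lu e(4,5) lr e(7) ci])
  have co: "cle (cadd (cadd Ga Gb) (cadd (cadd Gc G2) G3)) G"
  proof -
    have "cadd (cadd Ga Gb) (cadd (cadd Gc G2) G3) = cadd (cadd (cadd (cadd Ga Gb) Gc) G2) G3"
      by (simp add: cadd_def add_ac fun_eq_iff)
    moreover have "cle (cadd (cadd (cadd (cadd Ga Gb) Gc) G2) G3) (cadd (cadd G1 G2) G3)"
      using cle_mono[OF cle_mono[OF m(8) cle_refl] cle_refl] .
    ultimately show ?thesis using e(8) cle_trans by metis
  qed
  have "tj G (JApp t u (JApp r (lift 0 u') (lift 1 r'))) \<sigma> (Suc (na + nb + Suc (nc + n2 + n3)))"
    by (rule T_app[OF m(1,2,3,4,5) inner m(7) co])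
  moreover have "1 \<le> size (arrs P + A0)" using e(2) by (cases "arrs P + A0") auto
  then have "Suc (na + nb + Suc (nc + n2 + n3)) \<le> n" using m(9) e(9) by simp
  ultimately show ?thesis using rule(2) by auto
qed

lemma sr_pi: "step_pi t t' \<Longrightarrow> tj G t \<sigma> n \<Longrightarrow> \<exists>n'. n' \<le> n \<and> tj G t' \<sigma> n'"
  using sr_ctx[of pi_rule 0, OF sr_pi_root] by (auto simp: step_pi_def)

fun wt :: "tm \<Rightarrow> nat" where
  "wt (JVar i) = 1"
| "wt (JLam t) = Suc (wt t)"
| "wt (JApp t u r) = 2 * wt t + wt u + wt r"

lemma wt_pos: "1 \<le> wt t" by (induction t) auto
lemma wt_lift[simp]: "wt (lift k t) = wt t" by (induction t arbitrary: k) auto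

lemma wt_pi: "ctx_clos pi_rule t t' \<Longrightarrow> wt t' < wt t"
proof (induction rule: ctx_clos.induct)
  case (root x y)
  then obtain t u r u' r' where "x = JApp (JApp t u r) u' r'" "y = JApp t u (JApp r (lift 0 u') (lift 1 r'))"
    by (cases rule: pi_rule.cases) auto
  then show ?case using wt_pos[of t] by simp
qed auto

lemma beta_dbeta: "beta_rule t t' \<Longrightarrow> dbeta_rule t t'"
proof (induction rule: beta_rule.induct)
  case (1 t u r)
  have "dbeta_rule (JApp (plug [] (JLam t)) u r) (subst 0 (plug [] (subst 0 ((lift 0 ^^ length ([]::lctx)) u) t)) r)"
    by (rule dbeta_rule.intros)
  then show ?case by simp
qed
lemma ctx_clos_mono: assumes "\<And>a b. R a b \<Longrightarrow> S a b" shows "ctx_clos R t t' \<Longrightarrow> ctx_clos S t t'"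
proof (induction rule: ctx_clos.induct)
  case (root t s) then show ?case by (rule ctx_clos.root[OF assms])
next
  case (lam t s) show ?case by (rule ctx_clos.lam[OF lam.IH])
next
  case (app1 t s u r) show ?case by (rule ctx_clos.app1[OF app1.IH])
next
  case (app2 u s t r) show ?case by (rule ctx_clos.app2[OF app2.IH])
next
  case (app3 r s t u) show ?case by (rule ctx_clos.app3[OF app3.IH])
qed
lemma step_beta_dbeta: "step_beta t t' \<Longrightarrow> step_dbeta t t'"
  unfolding step_beta_def step_dbeta_def by (rule ctx_clos_mono[OF beta_dbeta])

lemma tj_acc_dbeta: "tj G t \<sigma> n \<Longrightarrow> Wellfounded.accp (\<lambda>y x. step_dbeta x y) t"
proof (induction n arbitrary: G t \<sigma> rule: less_induct)
  case (less n)
  show ?case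
  proof (rule accp.accI)
    fix y assume "step_dbeta t y"
    then obtain n' where "n' < n" "tj G y \<sigma> n'" using sr_dbeta less.prems by blast
    then show "Wellfounded.accp (\<lambda>y x. step_dbeta x y) y" using less.IH by blast
  qed
qed

lemma tj_acc_bp: "tj G t \<sigma> n \<Longrightarrow> Wellfounded.accp (\<lambda>y x. step_beta x y \<or> step_pi x y) t"
proof (induction n arbitrary: G t \<sigma> rule: less_induct)
  case (less n)
  note outer = less.IH
  have "\<forall>G t \<sigma>. wt t = k \<longrightarrow> tj G t \<sigma> n \<longrightarrow> Wellfounded.accp (\<lambda>y x. step_beta x y \<or> step_pi x y) t" for k
  proof (induction k rule: less_induct)
    case (less k)
    show ?case
    proof (intro allI impI)
      fix G t \<sigma> assume a: "wt t = k" "tj G t \<sigma> n"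
      show "Wellfounded.accp (\<lambda>y x. step_beta x y \<or> step_pi x y) t"
      proof (rule accp.accI)
        fix y assume "step_beta t y \<or> step_pi t y"
        then show "Wellfounded.accp (\<lambda>y x. step_beta x y \<or> step_pi x y) y"
        proof
          assume "step_beta t y"
          then obtain n' where "n' < n" "tj G y \<sigma> n'" using sr_dbeta step_beta_dbeta a(2) by blast
          then show ?thesis using outer by blast
        next
          assume s: "step_pi t y"
          then obtain n' where n': "n' \<le> n" "tj G y \<sigma> n'" using sr_pi a(2) by blast
          show ?thesis
          proof (cases "n' < n")
            case True then show ?thesis using n' outer by blast
          next
            case False
            then have "tj G y \<sigma> n" using n' by simp
            moreover have "wt y < k" using wt_pi s a(1) by (auto simp: step_pi_def)
            ultimately show ?thesis using less.IH by blast
          qed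
        qed
      qed
    qed
  qed
  then show ?case using less.prems by blast
qed


definition typable :: "tm \<Rightarrow> bool" where "typable t \<longleftrightarrow> (\<exists>G \<sigma> n. tj G t \<sigma> n)"

inductive isN :: "tm \<Rightarrow> bool" where
  "isN (JVar i)"
| "isN a \<Longrightarrow> isN c \<Longrightarrow> isN (JApp a b c)"

inductive psub :: "tm \<Rightarrow> tm \<Rightarrow> bool" where
  ps_lam: "psub t (JLam t)"
| ps_lam': "psub s t \<Longrightarrow> psub s (JLam t)"
| ps_a1: "psub t (JApp t u r)"
| ps_a2: "psub u (JApp t u r)"
| ps_a3: "psub r (JApp t u r)"
| ps_a1': "psub s t \<Longrightarrow> psub s (JApp t u r)"
| ps_a2': "psub s u \<Longrightarrow> psub s (JApp t u r)"
| ps_a3': "psub s r \<Longrightarrow> psub s (JApp t u r)"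

lemma mtj_flex: "(\<forall>\<tau>. \<exists>G m. tj G a \<tau> m) \<Longrightarrow> \<exists>G m. mtj G a A m"
proof (induction A)
  case empty then show ?case using M_empty by blast
next
  case (add x A)
  then obtain G m where "mtj G a A m" by blast
  moreover obtain G1 m1 where "tj G1 a x m1" using add.prems by blast
  ultimately show ?case using M_add[of G1 a x m1 G A m "cadd G1 G"] by auto
qed

lemma doms_const: "doms (image_mset (\<lambda>\<tau>. ({#\<sigma>#}, \<tau>)) N) = replicate_mset (size N) \<sigma>"
  by (induction N) auto

lemma cods_const: "cods (image_mset (\<lambda>\<tau>. (M, \<tau>)) N) = N"
  by (induction N) auto

lemma app_flex:
  assumes fa: "\<forall>\<tau>. \<exists>G m. tj G a \<tau> m" and b: "tj Gb b \<sigma>b nb" and c: "tj (ccons N Gc) c \<sigma> nc"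
  shows "\<exists>G m. tj G (JApp a b c) \<sigma> m"
proof -
  define N' where "N' = (if N = {#} then {#TB#} else N)"
  have N'ne: "N' \<noteq> {#}" and NN': "N \<subseteq># N'" by (auto simp: N'_def)
  define P where "P = image_mset (\<lambda>\<tau>. ({#\<sigma>b#}, \<tau>)) N'"
  have Pne: "P \<noteq> {#}" using N'ne by (simp add: P_def)
  obtain G1 n1 where 1: "mtj G1 a (arrs P) n1" using mtj_flex[OF fa] by blast
  obtain G2 n2 where 2: "mtj G2 b (replicate_mset (size N') \<sigma>b) n2" using mtj_replicate[OF b] by blast
  have Bne: "replicate_mset (size N') \<sigma>b \<noteq> {#}" using N'ne by simp
  have d: "doms P \<subseteq># replicate_mset (size N') \<sigma>b" by (simp add: P_def doms_const)
  have cN: "N \<subseteq># cods P" using NN' by (simp add: P_def cods_const)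
  have a1: "mtj G1 a (arrs P + {#}) n1" using 1 by simp
  have pne: "arrs P + {#} \<noteq> {#}" using Pne by simp
  have "tj (cadd (cadd G1 G2) Gc) (JApp a b c) \<sigma> (Suc (n1 + n2 + nc))"
    by (rule T_app[OF a1 pne 2 Bne d c cN cle_refl])
  then show ?thesis by blast
qed

lemma psub_trans: "psub t r \<Longrightarrow> psub s t \<Longrightarrow> psub s r"
  by (induction rule: psub.induct) (auto intro: psub.intros)

lemma flex: "isN n \<Longrightarrow> (\<forall>s. psub s n \<longrightarrow> typable s) \<Longrightarrow> \<forall>\<tau>. \<exists>G m. tj G n \<tau> m"
proof (induction rule: isN.induct)
  case (1 i)
  show ?case
  proof
    fix \<tau>
    have "tj (\<lambda>j. {#\<tau>#}) (JVar i) \<tau> 1" by (rule T_var) simp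
    then show "\<exists>G m. tj G (JVar i) \<tau> m" by blast
  qed
next
  case (2 a c b)
  have fa: "\<forall>\<tau>. \<exists>G m. tj G a \<tau> m" using 2 by (meson ps_a1')
  have fc: "\<forall>\<tau>. \<exists>G m. tj G c \<tau> m" using 2 by (meson ps_a3')
  obtain Gb \<sigma>b nb where b: "tj Gb b \<sigma>b nb" using 2(5) ps_a2 typable_def by blast
  show ?case
  proof
    fix \<tau>
    obtain Gc nc where "tj Gc c \<tau> nc" using fc by blast
    then have "tj (ccons (Gc 0) (cdel 0 Gc)) c \<tau> nc" by (simp add: ccons_eta)
    then show "\<exists>G m. tj G (JApp a b c) \<tau> m" using app_flex[OF fa b] by blast
  qed
qed

lemma unlift_n_mtj: "mtj G ((lift 0 ^^ k) u) A m \<Longrightarrow> \<exists>G'. mtj G' u A m"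
proof (induction k arbitrary: G)
  case 0 then show ?case by auto
next
  case (Suc k)
  then have "mtj G (lift 0 ((lift 0 ^^ k) u)) A m" by simp
  then have "mtj (cdel 0 G) ((lift 0 ^^ k) u) A m" using strengthen_tj(2) by blast
  then show ?case using Suc.IH by blast
qed

lemma shiftn_emp: "shiftn k cemp = cemp"
  by (induction k) (auto simp: ccons_emp)

lemma exp_key: "mtj D0 (plug D (subst 0 ((lift 0 ^^ length D) u) v)) N m \<Longrightarrow>
  \<exists>P Ga Gu na nu. cods P = N \<and> mtj Ga (plug D (JLam v)) (arrs P) na \<and> mtj Gu u (doms P) nu"
proof (induction N arbitrary: D0 m)
  case empty
  have "cods {#} = {#} \<and> mtj cemp (plug D (JLam v)) (arrs {#}) 0 \<and> mtj cemp u (doms {#}) 0"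
    by (simp add: M_empty)
  then show ?case by blast
next
  case (add \<tau> N)
  obtain D1 D2 m1 m2 where e: "tj D1 (plug D (subst 0 ((lift 0 ^^ length D) u) v)) \<tau> m1"
      "mtj D2 (plug D (subst 0 ((lift 0 ^^ length D) u) v)) N m2"
    using mtj_extract[OF add.prems, of \<tau>] by auto
  obtain P Ga Gu na nu where ih: "cods P = N" "mtj Ga (plug D (JLam v)) (arrs P) na" "mtj Gu u (doms P) nu"
    using add.IH[OF e(2)] by blast
  obtain GX nX where x: "tj GX (subst 0 ((lift 0 ^^ length D) u) v) \<tau> nX"
    "\<forall>X' \<tau>' E n'. tj (cadd GX (shiftn (length D) E)) X' \<tau>' n' \<longrightarrow> tj (cadd D1 E) (plug D X') \<tau>' (m1 - nX + n')"
    using plug_dec[OF e(1)] by blast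
  obtain M GV Du n1 mu where a: "tj (cins 0 M GV) v \<tau> n1" "mtj Du ((lift 0 ^^ length D) u) M mu" "cle (cadd GV Du) GX"
    using antisubst[OF x(1)] by blast
  have "tj (ccons M GX) v \<tau> n1" using tj_weaken(1)[OF a(1)] cle_add_left[OF a(3)] by (simp add: cins0 cle_ccons)
  then have "tj GX (JLam v) (Arr M \<tau>) (Suc n1)" by (rule T_lam)
  then have "tj (cadd GX (shiftn (length D) cemp)) (JLam v) (Arr M \<tau>) (Suc n1)" by (simp add: shiftn_emp)
  then have l: "tj D1 (plug D (JLam v)) (Arr M \<tau>) (m1 - nX + Suc n1)" using x(2) by fastforce
  obtain Du' where uu: "mtj Du' u M mu" using unlift_n_mtj[OF a(2)] by blast
  have "cods (add_mset (M, \<tau>) P) = add_mset \<tau> N" using ih(1) by simp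
  moreover have "mtj (cadd D1 Ga) (plug D (JLam v)) (arrs (add_mset (M, \<tau>) P)) (m1 - nX + Suc n1 + na)"
    using M_add[OF l ih(2) cle_refl] by simp
  moreover have "mtj (cadd Du' Gu) u (doms (add_mset (M, \<tau>) P)) (mu + nu)"
    using mtj_union[OF uu ih(3)] by simp
  ultimately show ?case by blast
qed

lemma root_exp:
  assumes h: "tj G (subst 0 (plug D (subst 0 ((lift 0 ^^ length D) u) v)) r) \<sigma> n"
    and tl: "typable (plug D (JLam v))" and tu: "typable u"
  shows "\<exists>G' n'. tj G' (JApp (plug D (JLam v)) u r) \<sigma> n'"
proof -
  obtain N G1 D0 n1 m where a: "tj (cins 0 N G1) r \<sigma> n1"
     "mtj D0 (plug D (subst 0 ((lift 0 ^^ length D) u) v)) N m"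
    using antisubst[OF h] by blast
  obtain P Ga Gu na nu where k: "cods P = N" "mtj Ga (plug D (JLam v)) (arrs P) na" "mtj Gu u (doms P) nu"
    using exp_key[OF a(2)] by blast
  obtain Gl \<rho> nl where l: "tj Gl (plug D (JLam v)) \<rho> nl" using tl typable_def by blast
  obtain Gu0 \<sigma>u nu0 where u0: "tj Gu0 u \<sigma>u nu0" using tu typable_def by blast
  have 1: "mtj (cadd Ga Gl) (plug D (JLam v)) (arrs P + {#\<rho>#}) (na + nl)"
    using mtj_union[OF k(2) mtj_single[OF l]] .
  have 2: "mtj (cadd Gu Gu0) u (doms P + {#\<sigma>u#}) (nu + nu0)"
    using mtj_union[OF k(3) mtj_single[OF u0]] .
  have r: "tj (ccons N G1) r \<sigma> n1" using a(1) by (simp add: cins0)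
  have "tj (cadd (cadd (cadd Ga Gl) (cadd Gu Gu0)) G1) (JApp (plug D (JLam v)) u r) \<sigma> (Suc (na + nl + (nu + nu0) + n1))"
    by (rule T_app[OF 1 _ 2 _ _ r _ cle_refl]) (auto simp: k(1))
  then show ?thesis by blast
qed


datatype hc = HHole | HL hc tm tm | HR tm tm hc

fun hplug :: "hc \<Rightarrow> tm \<Rightarrow> tm" where
  "hplug HHole R = R"
| "hplug (HL H u r) R = JApp (hplug H R) u r"
| "hplug (HR a b H) R = JApp a b (hplug H R)"

inductive hok :: "hc \<Rightarrow> bool" where
  "hok HHole"
| "hok H \<Longrightarrow> hok (HL H u r)"
| "isN a \<Longrightarrow> hok H \<Longrightarrow> hok (HR a b H)"

lemma hplug_step: "dbeta_rule R R' \<Longrightarrow> step_dbeta (hplug H R) (hplug H R')"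
  unfolding step_dbeta_def by (induction H) (auto intro: ctx_clos.intros)

lemma mtj_map:
  assumes h: "\<forall>G \<sigma> n. tj G X \<sigma> n \<longrightarrow> (\<exists>G' n'. tj G' Y \<sigma> n')"
  shows "mtj G Z A n \<Longrightarrow> Z = X \<Longrightarrow> \<exists>G' n'. mtj G' Y A n'"
proof (induction rule: tj_mtj.inducts(2)[where ?P1.0="\<lambda>_ _ _ _. True"])
  case (M_empty G t) then show ?case using tj_mtj.M_empty by blast
next
  case (M_add G1 t \<sigma> n1 G2 A n2 G)
  obtain H1 m1 where "tj H1 Y \<sigma> m1" using h M_add by meson
  moreover obtain H2 m2 where "mtj H2 Y A m2" using M_add by blast
  ultimately show ?case using tj_mtj.M_add[of H1 Y \<sigma> m1 H2 A m2 "cadd H1 H2"] by auto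
qed auto

lemma hexp: "hok H \<Longrightarrow> dbeta_rule R R' \<Longrightarrow> (\<forall>s. psub s (hplug H R) \<longrightarrow> typable s) \<Longrightarrow>
  tj G (hplug H R') \<sigma> n \<Longrightarrow> \<exists>G' n'. tj G' (hplug H R) \<sigma> n'"
proof (induction arbitrary: G \<sigma> n rule: hok.induct)
  case 1
  from 1(1) obtain D v u r where e: "R = JApp (plug D (JLam v)) u r"
     "R' = subst 0 (plug D (subst 0 ((lift 0 ^^ length D) u) v)) r"
    by (cases rule: dbeta_rule.cases) auto
  have "typable (plug D (JLam v))" "typable u" using 1(2) e(1) by (auto intro: psub.intros)
  then show ?case using root_exp 1(3) e by auto
next
  case (2 H u r)
  have "tj G (JApp (hplug H R') u r) \<sigma> n" using 2(5) by simp
  then obtain G1 P A0 n1 G2 B n2 N G3 n3 where e: "mtj G1 (hplug H R') (arrs P + A0) n1" "arrs P + A0 \<noteq> {#}"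
    "mtj G2 u B n2" "B \<noteq> {#}" "doms P \<subseteq># B"
    "tj (ccons N G3) r \<sigma> n3" "N \<subseteq># cods P" "cle (cadd (cadd G1 G2) G3) G" "n = Suc (n1 + n2 + n3)"
    by (elim tj_appE) blast
  have "\<forall>s. psub s (hplug H R) \<longrightarrow> typable s" using 2(4) by (auto intro: psub.intros)
  then have "\<forall>G \<sigma> n. tj G (hplug H R') \<sigma> n \<longrightarrow> (\<exists>G' n'. tj G' (hplug H R) \<sigma> n')"
    using 2(2)[OF 2(3)] by blast
  then obtain G1' n1' where "mtj G1' (hplug H R) (arrs P + A0) n1'" using mtj_map[OF _ e(1) refl] by blast
  then have "tj (cadd (cadd G1' G2) G3) (JApp (hplug H R) u r) \<sigma> (Suc (n1' + n2 + n3))"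
    by (rule T_app[OF _ e(2,3,4,5,6,7) cle_refl])
  then show ?case by auto
next
  case (3 a H b)
  have "tj G (JApp a b (hplug H R')) \<sigma> n" using 3(6) by simp
  then obtain G1 P A0 n1 G2 B n2 N G3 n3 where e: "mtj G1 a (arrs P + A0) n1" "arrs P + A0 \<noteq> {#}"
    "mtj G2 b B n2" "B \<noteq> {#}" "doms P \<subseteq># B"
    "tj (ccons N G3) (hplug H R') \<sigma> n3" "N \<subseteq># cods P" "cle (cadd (cadd G1 G2) G3) G" "n = Suc (n1 + n2 + n3)"
    by (elim tj_appE) blast
  have "\<forall>s. psub s (hplug H R) \<longrightarrow> typable s" using 3(5) by (auto intro: psub.intros)
  then obtain G' n' where ih: "tj G' (hplug H R) \<sigma> n'" using 3(3)[OF 3(4) _ e(6)] by blast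
  define N' where "N' = G' 0"
  have ih': "tj (ccons N' (cdel 0 G')) (hplug H R) \<sigma> n'" using ih by (simp add: N'_def ccons_eta)
  obtain \<sigma>b where "\<sigma>b \<in># B" using e(4) by blast
  then obtain Gb nb where b: "tj Gb b \<sigma>b nb" using mtj_extract[OF e(3)] by blast
  have fa: "\<forall>\<tau>. \<exists>G m. tj G a \<tau> m" using flex[OF 3(1)] 3(5) by (auto intro: psub.intros)
  define P' where "P' = P + image_mset (\<lambda>\<tau>. ({#\<sigma>b#}, \<tau>)) N'"
  obtain Ga na where a2: "mtj Ga a (arrs (image_mset (\<lambda>\<tau>. ({#\<sigma>b#}, \<tau>)) N')) na" using mtj_flex[OF fa] by blast
  have a': "mtj (cadd G1 Ga) a (arrs P' + A0) (n1 + na)"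
    using mtj_union[OF e(1) a2] by (simp add: P'_def add_ac)
  have ne': "arrs P' + A0 \<noteq> {#}" using e(2) by (simp add: P'_def)
  obtain Gb2 nb2 where b2: "mtj Gb2 b (replicate_mset (size N') \<sigma>b) nb2" using mtj_replicate[OF b] by blast
  have b': "mtj (cadd G2 Gb2) b (B + replicate_mset (size N') \<sigma>b) (n2 + nb2)" using mtj_union[OF e(3) b2] .
  have ne2: "B + replicate_mset (size N') \<sigma>b \<noteq> {#}" using e(4) by simp
  have d': "doms P' \<subseteq># B + replicate_mset (size N') \<sigma>b" using e(5) by (simp add: P'_def doms_const subset_mset.add_mono)
  have c': "N' \<subseteq># cods P'" by (simp add: P'_def cods_const)
  have "tj (cadd (cadd (cadd G1 Ga) (cadd G2 Gb2)) (cdel 0 G')) (JApp a b (hplug H R)) \<sigma> (Suc (n1 + na + (n2 + nb2) + n'))"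
    by (rule T_app[OF a' ne' b' ne2 d' ih' c' cle_refl])
  then show ?case by auto
qed

lemma abc_lemma:
  assumes a: "mtj G1 a (arrs Q + Q0) n1" "arrs Q + Q0 \<noteq> {#}" and b: "mtj G2 b B n2" "B \<noteq> {#}" "doms Q \<subseteq># B"
  shows "mtj Gc c A nc \<Longrightarrow> Gc 0 \<subseteq># cods Q \<Longrightarrow> \<exists>G' n'. mtj G' (JApp a b c) A n'"
proof (induction rule: tj_mtj.inducts(2)[where ?P1.0="\<lambda>_ _ _ _. True"])
  case (M_empty G t) then show ?case using tj_mtj.M_empty by blast
next
  case (M_add H1 c \<sigma> k1 H2 A k2 G)
  have "H1 0 \<subseteq># cods Q" using cle_at1[OF \<open>cle (cadd H1 H2) G\<close>, of 0] M_add.prems subset_mset.order_trans by blast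
  moreover have "tj (ccons (H1 0) (cdel 0 H1)) c \<sigma> k1" using M_add.hyps(1) by (simp add: ccons_eta)
  ultimately have "tj (cadd (cadd G1 G2) (cdel 0 H1)) (JApp a b c) \<sigma> (Suc (n1 + n2 + k1))"
    using T_app[OF a b] cle_refl by blast
  moreover have "H2 0 \<subseteq># cods Q" using cle_at1[OF \<open>cle (cadd H1 H2) G\<close>[unfolded cadd_comm[of H1]], of 0] M_add.prems subset_mset.order_trans by blast
  then obtain G' n' where "mtj G' (JApp a b c) A n'" using M_add.IH by blast
  ultimately show ?case using tj_mtj.M_add[OF _ _ cle_refl] by blast
qed auto


lemma pi_exp: "tj G (JApp a b (JApp c (lift 0 u) (lift 1 r))) \<sigma> n \<Longrightarrow> \<exists>G' n'. tj G' (JApp (JApp a b c) u r) \<sigma> n'"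
proof -
  assume "tj G (JApp a b (JApp c (lift 0 u) (lift 1 r))) \<sigma> n"
  then obtain G1 Q Q0 n1 G2 B n2 Nx G3 n3 where e: "mtj G1 a (arrs Q + Q0) n1" "arrs Q + Q0 \<noteq> {#}"
    "mtj G2 b B n2" "B \<noteq> {#}" "doms Q \<subseteq># B"
    "tj (ccons Nx G3) (JApp c (lift 0 u) (lift 1 r)) \<sigma> n3" "Nx \<subseteq># cods Q"
    by (rule tj_appE) blast
  from e(6) obtain Gc P A0 nc Gu Bu nu Ny Gr nr where f: "mtj Gc c (arrs P + A0) nc" "arrs P + A0 \<noteq> {#}"
    "mtj Gu (lift 0 u) Bu nu" "Bu \<noteq> {#}" "doms P \<subseteq># Bu"
    "tj (ccons Ny Gr) (lift 1 r) \<sigma> nr" "Ny \<subseteq># cods P" "cle (cadd (cadd Gc Gu) Gr) (ccons Nx G3)"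
    by (rule tj_appE) blast
  have u: "mtj (cdel 0 Gu) u Bu nu" using strengthen_tj(2)[OF f(3) refl] .
  have "tj (cdel 1 (ccons Ny Gr)) r \<sigma> nr" using strengthen_tj(1)[OF f(6) refl] .
  then have r: "tj (ccons Ny (cdel 0 Gr)) r \<sigma> nr" using cdel_Suc[of 0 Ny Gr] by simp
  have "Gc 0 \<subseteq># Nx" using cle_at1[OF cle_add_left[OF f(8)], of 0] by simp
  then have "Gc 0 \<subseteq># cods Q" using e(7) subset_mset.order_trans by blast
  then obtain G' n' where abc: "mtj G' (JApp a b c) (arrs P + A0) n'"
    using abc_lemma[OF e(1,2,3,4,5) f(1)] by blast
  have "tj (cadd (cadd G' (cdel 0 Gu)) (cdel 0 Gr)) (JApp (JApp a b c) u r) \<sigma> (Suc (n' + nu + nr))"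
    by (rule T_app[OF abc f(2) u f(4,5) r f(7) cle_refl])
  then show ?thesis by blast
qed

lemma classify: "isN s \<or> (\<exists>D v. s = plug D (JLam v)) \<or> (\<exists>H R R'. hok H \<and> s = hplug H R \<and> dbeta_rule R R')"
proof (induction s)
  case (JVar i) then show ?case by (auto intro: isN.intros)
next
  case (JLam v) then show ?case by (metis plug.simps(1))
next
  case (JApp a b c)
  show ?case
  proof (cases "\<exists>D v. a = plug D (JLam v)")
    case True
    then obtain D v where "a = plug D (JLam v)" by blast
    then have "hok HHole \<and> JApp a b c = hplug HHole (JApp a b c) \<and>
      dbeta_rule (JApp a b c) (subst 0 (plug D (subst 0 ((lift 0 ^^ length D) b) v)) c)"
      by (auto intro: hok.intros dbeta_rule.intros)
    then show ?thesis by blast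
  next
    case na: False
    show ?thesis
    proof (cases "\<exists>D v. c = plug D (JLam v)")
      case True
      then obtain D v where "c = plug D (JLam v)" by blast
      then have "JApp a b c = plug ((a, b) # D) (JLam v)" by simp
      then show ?thesis by blast
    next
      case nc: False
      show ?thesis
      proof (cases "isN a")
        case True
        show ?thesis
        proof (cases "isN c")
          case True then show ?thesis using \<open>isN a\<close> by (auto intro: isN.intros)
        next
          case False
          then obtain H R R' where "hok H" "c = hplug H R" "dbeta_rule R R'" using JApp.IH(3) nc by blast
          then have "hok (HR a b H) \<and> JApp a b c = hplug (HR a b H) R \<and> dbeta_rule R R'"
            using \<open>isN a\<close> by (auto intro: hok.intros)
          then show ?thesis by blast
        qed
      next
        case False
        then obtain H R R' where "hok H" "a = hplug H R" "dbeta_rule R R'" using JApp.IH(1) na by blast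
        then have "hok (HL H b c) \<and> JApp a b c = hplug (HL H b c) R \<and> dbeta_rule R R'"
          by (auto intro: hok.intros)
        then show ?thesis by blast
      qed
    qed
  qed
qed

lemma psub_size: "psub s t \<Longrightarrow> size s < size t"
  by (induction rule: psub.induct) auto

lemma psub_ctx: "psub s t \<Longrightarrow> ctx_clos \<rho> s s' \<Longrightarrow> \<exists>t'. ctx_clos \<rho> t t' \<and> psub s' t'"
  by (induction rule: psub.induct) (blast intro: ctx_clos.intros psub.intros)+

lemma acc_sub_induct:
  assumes acc: "Wellfounded.accp (\<lambda>y x. R x y) t"
    and ctx: "\<And>s t' s'. psub s t' \<Longrightarrow> R s s' \<Longrightarrow> \<exists>t''. R t' t'' \<and> psub s' t''"
    and step: "\<And>s. (\<And>s'. R s s' \<Longrightarrow> P s') \<Longrightarrow> (\<And>s'. psub s' s \<Longrightarrow> P s') \<Longrightarrow> P s"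
  shows "P t"
proof -
  from acc have "\<forall>s. (s = t \<or> psub s t) \<longrightarrow> P s"
  proof (induction rule: accp.induct)
    case (accI x)
    have "s = x \<or> psub s x \<Longrightarrow> P s" for s
    proof (induction s rule: measure_induct_rule[of size])
      case (less s)
      show ?case
      proof (rule step)
        fix s' assume r: "R s s'"
        show "P s'"
        proof (cases "s = x")
          case True then show ?thesis using accI.IH r by blast
        next
          case False
          then have "psub s x" using less.prems by blast
          then obtain t'' where "R x t''" "psub s' t''" using ctx r by blast
          then show ?thesis using accI.IH by blast
        qed
      next
        fix s' assume p: "psub s' s"
        then have "psub s' x" using less.prems psub_trans by blast
        moreover have "size s' < size s" using psub_size[OF p] .
        ultimately show "P s'" using less.IH by blast
      qed
    qed
    then show ?case by blast
  qed
  then show ?thesis by blast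
qed

lemma typable_lam: "typable b \<Longrightarrow> typable (JLam b)"
proof -
  assume "typable b"
  then obtain G \<sigma> n where "tj G b \<sigma> n" unfolding typable_def by blast
  then have "tj (ccons (G 0) (cdel 0 G)) b \<sigma> n" by (simp add: ccons_eta)
  then show ?thesis unfolding typable_def by (blast intro: T_lam)
qed

lemma typable_var: "typable (JVar i)"
proof -
  have "tj (\<lambda>j. {#TB#}) (JVar i) TB 1" by (rule T_var) simp
  then show ?thesis unfolding typable_def by blast
qed

lemma typable_app_N: "isN a \<Longrightarrow> (\<forall>s. psub s (JApp a u r) \<longrightarrow> typable s) \<Longrightarrow> typable (JApp a u r)"
proof -
  assume n: "isN a" and h: "\<forall>s. psub s (JApp a u r) \<longrightarrow> typable s"
  have fa: "\<forall>\<tau>. \<exists>G m. tj G a \<tau> m" using flex[OF n] h by (auto intro: psub.intros)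
  obtain Gu \<sigma>u nu where u: "tj Gu u \<sigma>u nu" using h typable_def by (blast intro: psub.intros)
  obtain Gr \<sigma> nr where "tj Gr r \<sigma> nr" using h typable_def by (blast intro: psub.intros)
  then have r: "tj (ccons (Gr 0) (cdel 0 Gr)) r \<sigma> nr" by (simp add: ccons_eta)
  show ?thesis using app_flex[OF fa u r] typable_def by blast
qed

lemma sn_typable_d: assumes "Wellfounded.accp (\<lambda>y x. step_dbeta x y) t" shows "typable t"
proof (rule acc_sub_induct[OF assms])
  fix s t' s' assume "psub s t'" "step_dbeta s s'"
  then show "\<exists>t''. step_dbeta t' t'' \<and> psub s' t''" using psub_ctx[of s t' dbeta_rule s'] by (auto simp: step_dbeta_def)
next
  fix s assume IH1: "\<And>s'. step_dbeta s s' \<Longrightarrow> typable s'" and IH2: "\<And>s'. psub s' s \<Longrightarrow> typable s'"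
  show "typable s"
  proof (cases s)
    case (JVar i) then show ?thesis by (simp add: typable_var)
  next
    case (JLam b) then show ?thesis using IH2 typable_lam by (blast intro: psub.intros)
  next
    case (JApp a u r)
    have ps: "\<forall>s'. psub s' (JApp a u r) \<longrightarrow> typable s'" using IH2 JApp by blast
    consider "isN a" | D v where "a = plug D (JLam v)" | H R R' where "hok H" "a = hplug H R" "dbeta_rule R R'"
      using classify[of a] by blast
    then show ?thesis
    proof cases
      case 1 then show ?thesis using typable_app_N[OF 1 ps] JApp by simp
    next
      case 2
      have "step_dbeta s (subst 0 (plug D (subst 0 ((lift 0 ^^ length D) u) v)) r)"
        unfolding step_dbeta_def using JApp 2 by (auto intro: ctx_clos.root dbeta_rule.intros)
      then have "typable (subst 0 (plug D (subst 0 ((lift 0 ^^ length D) u) v)) r)" using IH1 by blast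
      then obtain G \<sigma> n where h: "tj G (subst 0 (plug D (subst 0 ((lift 0 ^^ length D) u) v)) r) \<sigma> n"
        unfolding typable_def by blast
      have t1: "typable (plug D (JLam v))" using ps 2 by (auto intro: psub.intros)
      have t2: "typable u" using ps by (auto intro: psub.intros)
      obtain G' n' where "tj G' (JApp (plug D (JLam v)) u r) \<sigma> n'" using root_exp[OF h t1 t2] by blast
      then show ?thesis unfolding typable_def JApp 2 by blast
    next
      case 3
      have "step_dbeta s (hplug (HL H u r) R')" using hplug_step[OF 3(3), of "HL H u r"] JApp 3(2) by simp
      then have "typable (hplug (HL H u r) R')" using IH1 by blast
      then obtain G \<sigma> n where "tj G (hplug (HL H u r) R') \<sigma> n" unfolding typable_def by blast
      moreover have "hok (HL H u r)" using 3(1) by (rule hok.intros)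
      moreover have "\<forall>s'. psub s' (hplug (HL H u r) R) \<longrightarrow> typable s'" using ps 3(2) by simp
      ultimately obtain G' n' where "tj G' (hplug (HL H u r) R) \<sigma> n'" using hexp[OF _ 3(3)] by blast
      then show ?thesis unfolding typable_def JApp 3(2) by auto
    qed
  qed
qed

lemma sn_typable_bp: assumes "Wellfounded.accp (\<lambda>y x. step_beta x y \<or> step_pi x y) t" shows "typable t"
proof (rule acc_sub_induct[OF assms])
  fix s t' s' assume "psub s t'" "step_beta s s' \<or> step_pi s s'"
  then show "\<exists>t''. (step_beta t' t'' \<or> step_pi t' t'') \<and> psub s' t''"
    using psub_ctx[of s t' beta_rule s'] psub_ctx[of s t' pi_rule s'] by (auto simp: step_beta_def step_pi_def)
next
  fix s assume IH1: "\<And>s'. step_beta s s' \<or> step_pi s s' \<Longrightarrow> typable s'" and IH2: "\<And>s'. psub s' s \<Longrightarrow> typable s'"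
  show "typable s"
  proof (cases s)
    case (JVar i) then show ?thesis by (simp add: typable_var)
  next
    case (JLam b) then show ?thesis using IH2 typable_lam by (blast intro: psub.intros)
  next
    case (JApp a u r)
    have ps: "\<forall>s'. psub s' (JApp a u r) \<longrightarrow> typable s'" using IH2 JApp by blast
    show ?thesis
    proof (cases a)
      case (JVar i)
      then have "isN a" by (simp add: isN.intros)
      then show ?thesis using typable_app_N[OF _ ps] \<open>s = JApp a u r\<close> by simp
    next
      case (JLam v)
      have "step_beta s (subst 0 (subst 0 u v) r)"
        unfolding step_beta_def using JApp JLam by (auto intro: ctx_clos.root beta_rule.intros)
      then have "typable (subst 0 (subst 0 u v) r)" using IH1 by blast
      then obtain G \<sigma> n where h: "tj G (subst 0 (plug [] (subst 0 ((lift 0 ^^ length ([]::lctx)) u) v)) r) \<sigma> n"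
        unfolding typable_def by auto
      have "typable (plug [] (JLam v))" "typable u" using ps JLam by (auto intro: psub.intros)
      then obtain G' n' where "tj G' (JApp (plug [] (JLam v)) u r) \<sigma> n'" using root_exp[OF h] by blast
      then show ?thesis using \<open>s = JApp a u r\<close> JLam typable_def by auto
    next
      case (JApp a1 b1 c1)
      have "step_pi s (JApp a1 b1 (JApp c1 (lift 0 u) (lift 1 r)))"
        unfolding step_pi_def \<open>s = JApp a u r\<close> JApp by (rule ctx_clos.root) (rule pi_rule.intros)
      then have "typable (JApp a1 b1 (JApp c1 (lift 0 u) (lift 1 r)))" using IH1 by blast
      then obtain G \<sigma> n where "tj G (JApp a1 b1 (JApp c1 (lift 0 u) (lift 1 r))) \<sigma> n" unfolding typable_def by blast
      then obtain G' n' where "tj G' (JApp (JApp a1 b1 c1) u r) \<sigma> n'" using pi_exp by blast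
      then show ?thesis unfolding typable_def \<open>s = JApp a u r\<close> JApp by blast
    qed
  qed
qed


lemma accp_SN: "Wellfounded.accp (\<lambda>y x. R x y) t \<Longrightarrow> SN R t"
proof (induction rule: accp.induct)
  case (accI x)
  show ?case unfolding SN_def
  proof
    assume "\<exists>f. f 0 = x \<and> (\<forall>i. R (f i) (f (Suc i)))"
    then obtain f where f: "f 0 = x" "\<forall>i. R (f i) (f (Suc i))" by blast
    then have "R x (f 1)" by (metis One_nat_def)
    then have "SN R (f 1)" using accI.IH by blast
    moreover have "\<exists>g. g 0 = f 1 \<and> (\<forall>i. R (g i) (g (Suc i)))"
      by (rule exI[of _ "\<lambda>i. f (Suc i)"]) (use f in simp)
    ultimately show False unfolding SN_def by blast
  qed
qed

lemma SN_accp: "SN R t \<Longrightarrow> Wellfounded.accp (\<lambda>y x. R x y) t"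
proof (rule ccontr)
  assume sn: "SN R t" and na: "\<not> Wellfounded.accp (\<lambda>y x. R x y) t"
  define nxt where "nxt x = (SOME z. R x z \<and> \<not> Wellfounded.accp (\<lambda>y x. R x y) z)" for x
  have step: "\<not> Wellfounded.accp (\<lambda>y x. R x y) x \<Longrightarrow> R x (nxt x) \<and> \<not> Wellfounded.accp (\<lambda>y x. R x y) (nxt x)" for x
  proof -
    assume "\<not> Wellfounded.accp (\<lambda>y x. R x y) x"
    then obtain z where "R x z" "\<not> Wellfounded.accp (\<lambda>y x. R x y) z"
      by (rule not_accp_down) blast
    then have "\<exists>z. R x z \<and> \<not> Wellfounded.accp (\<lambda>y x. R x y) z" by blast
    then show ?thesis unfolding nxt_def by (rule someI_ex)
  qed
  define f where "f n = (nxt ^^ n) t" for n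
  have nf: "\<not> Wellfounded.accp (\<lambda>y x. R x y) (f n)" for n
    by (induction n) (auto simp: f_def na step)
  have "R (f i) (f (Suc i))" for i using step[OF nf[of i]] by (simp add: f_def)
  moreover have "f 0 = t" by (simp add: f_def)
  ultimately show False using sn unfolding SN_def by blast
qed

theorem mainTheorem20:
  fixes t :: tm
  shows "SN step_dbeta t \<longleftrightarrow> SN (\<lambda>a b. step_beta a b \<or> step_pi a b) t"
proof
  assume "SN step_dbeta t"
  then have "Wellfounded.accp (\<lambda>y x. step_dbeta x y) t" by (rule SN_accp)
  then have "typable t" by (rule sn_typable_d)
  then obtain G \<sigma> n where "tj G t \<sigma> n" unfolding typable_def by blast
  then have "Wellfounded.accp (\<lambda>y x. step_beta x y \<or> step_pi x y) t" by (rule tj_acc_bp)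
  then show "SN (\<lambda>a b. step_beta a b \<or> step_pi a b) t" using accp_SN[of "\<lambda>a b. step_beta a b \<or> step_pi a b" t] by simp
next
  assume "SN (\<lambda>a b. step_beta a b \<or> step_pi a b) t"
  then have "Wellfounded.accp (\<lambda>y x. step_beta x y \<or> step_pi x y) t"
    using SN_accp[of "\<lambda>a b. step_beta a b \<or> step_pi a b" t] by simp
  then have "typable t" by (rule sn_typable_bp)
  then obtain G \<sigma> n where "tj G t \<sigma> n" unfolding typable_def by blast
  then have "Wellfounded.accp (\<lambda>y x. step_dbeta x y) t" by (rule tj_acc_dbeta)
  then show "SN step_dbeta t" by (rule accp_SN)
qed


end
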